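(* Let $m\in\mathrm{Ran}[m_N]\setminus\{-1,1\}$ and $\mu=\tanh^{-1}(-m)$. Let $I\subset\Lambda$ be an index set of fixed size and $f:\{-1,1\}^{|I|}\to\mathbb{R}$. Then \[ \left|\langle f\circ P_I\rangle_{\mathrm{MC}}^{m;N}-\langle f\circ P_I\rangle_{\mathrm{C}}^{\mu;N}\right|\le\sqrt{2|I|}\left(\max_{\phi}|f(\phi)|\right)\sqrt{\frac{\mathcal{H}(\mu_{\mathrm{MC}}^{m;N}\|\mu_{\mathrm{C}}^{\mu;N})}{N}}\le\sqrt{2|I|}\left(\max_{\phi}|f(\phi)|\right)\sqrt{\frac{\ln(N+1)}{N}}, \] so that $\langle f\circ P_I\rangle_{\mathrm{MC}}^{m;N}=\langle f\circ P_I\rangle_{\mathrm{C}}^{\mu;N}+O(\sqrt{\ln N}\,N^{-1/2})$. Moreover, there is a cutoff $N(m)\in\mathbb{N}$ such that for $N\ge N(m)$, $\frac{\ln(N+1)}{4N}\le\frac{\mathcal{H}(\mu_{\mathrm{MC}}^{m;N}\|\mu_{\mathrm{C}}^{\mu;N})}{N}$.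
   Context: $\Lambda$ is a finite lattice with $N=|\Lambda|$ sites, $\mathcal{S}=\{-1,1\}^\Lambda$, $M[\phi]=\sum_x\phi(x)$, $m_N=M/N$ with range $\mathrm{Ran}[m_N]$. $\mu_{\mathrm{MC}}^{m;N}$ is the uniform probability measure on $\{\phi:m_N[\phi]=m\}$; $\mu_{\mathrm{C}}^{\mu;N}$ is the probability measure on $\mathcal{S}$ with weights proportional to $e^{-\mu M[\phi]}$. $P_I$ is restriction to the sites of $I$; the maximum is over $\phi\in\{-1,1\}^{|I|}$. $\mathcal{H}$ is relative entropy. $X(N)=O(g(N))$ means $|X(N)|\le Cg(N)$ for all $N\ge N_0$, with $C$ independent of $N$ (possibly depending on the other parameters), as $N\to\infty$ along values with $m\in\mathrm{Ran}[m_N]$. *)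

theory Defs
  imports Complex_Main "HOL-Library.FuncSet"
begin

definition spins :: "'a set \<Rightarrow> ('a \<Rightarrow> real) set" where
  "spins Lam = Lam \<rightarrow>\<^sub>E {-1, 1}"

definition magn :: "'a set \<Rightarrow> ('a \<Rightarrow> real) \<Rightarrow> real" where
  "magn Lam \<phi> = (\<Sum>x\<in>Lam. \<phi> x)"

definition magN :: "'a set \<Rightarrow> ('a \<Rightarrow> real) \<Rightarrow> real" where
  "magN Lam \<phi> = magn Lam \<phi> / real (card Lam)"

definition RanM :: "'a set \<Rightarrow> real set" where
  "RanM Lam = magN Lam ` spins Lam"

definition mc_set :: "'a set \<Rightarrow> real \<Rightarrow> ('a \<Rightarrow> real) set" where
  "mc_set Lam m = {\<phi> \<in> spins Lam. magN Lam \<phi> = m}"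

definition mu_MC :: "'a set \<Rightarrow> real \<Rightarrow> ('a \<Rightarrow> real) \<Rightarrow> real" where
  "mu_MC Lam m \<phi> = (if \<phi> \<in> mc_set Lam m then 1 / real (card (mc_set Lam m)) else 0)"

definition Zc :: "'a set \<Rightarrow> real \<Rightarrow> real" where
  "Zc Lam \<mu> = (\<Sum>\<phi>\<in>spins Lam. exp (- \<mu> * magn Lam \<phi>))"

definition mu_C :: "'a set \<Rightarrow> real \<Rightarrow> ('a \<Rightarrow> real) \<Rightarrow> real" where
  "mu_C Lam \<mu> \<phi> = exp (- \<mu> * magn Lam \<phi>) / Zc Lam \<mu>"

definition expect :: "'a set \<Rightarrow> (('a \<Rightarrow> real) \<Rightarrow> real) \<Rightarrow> (('a \<Rightarrow> real) \<Rightarrow> real) \<Rightarrow> real" where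
  "expect Lam p g = (\<Sum>\<phi>\<in>spins Lam. p \<phi> * g \<phi>)"

definition rel_entropy :: "'a set \<Rightarrow> (('a \<Rightarrow> real) \<Rightarrow> real) \<Rightarrow> (('a \<Rightarrow> real) \<Rightarrow> real) \<Rightarrow> real" where
  "rel_entropy Lam p q = (\<Sum>\<phi>\<in>spins Lam. if p \<phi> = 0 then 0 else p \<phi> * ln (p \<phi> / q \<phi>))"

definition proj :: "'a set \<Rightarrow> ('a \<Rightarrow> real) \<Rightarrow> ('a \<Rightarrow> real)" where
  "proj I \<phi> = restrict \<phi> I"

definition maxabs :: "'a set \<Rightarrow> (('a \<Rightarrow> real) \<Rightarrow> real) \<Rightarrow> real" where
  "maxabs I f = Max ((\<lambda>\<psi>. \<bar>f \<psi>\<bar>) ` spins I)"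

end

theory Submission
  imports Defs
begin

definition kl :: "real \<Rightarrow> real \<Rightarrow> real" where
  "kl u v = (if u = 0 then 0 else u * ln (u / v))"

lemma ln_ge_1_minus_inv: "x > 0 \<Longrightarrow> 1 - 1 / x \<le> ln (x::real)"
  using ln_le_minus_one[of "1/x"] by (simp add: ln_div)

lemma kl_scale: "c > 0 \<Longrightarrow> v > 0 \<Longrightarrow> kl (c * u) (c * v) = c * kl u v"
  by (simp add: kl_def)

lemma kl_mono_den: "u \<ge> 0 \<Longrightarrow> 0 < v \<Longrightarrow> v \<le> w \<Longrightarrow> kl u w \<le> kl u v"
  unfolding kl_def
  by (auto intro!: mult_left_mono simp: divide_left_mono)

lemma logsum2:
  assumes u1: "u1 \<ge> 0" and u2: "u2 \<ge> 0" and v1: "v1 > 0" and v2: "v2 > 0"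
  shows "kl (u1 + u2) (v1 + v2) \<le> kl u1 v1 + kl u2 v2"
proof (cases "u1 = 0 \<or> u2 = 0")
  case True
  then show ?thesis
  proof
    assume "u1 = 0" then show ?thesis using kl_mono_den[of u2 v2 "v1+v2"] u2 v1 v2
      by (simp add: kl_def)
  next
    assume "u2 = 0" then show ?thesis using kl_mono_den[of u1 v1 "v1+v2"] u1 v1 v2
      by (simp add: kl_def)
  qed
next
  case False
  hence p1: "u1 > 0" and p2: "u2 > 0" using u1 u2 by auto
  define U where "U = u1 + u2"
  define V where "V = v1 + v2"
  have U: "U > 0" and V: "V > 0" using p1 p2 v1 v2 by (auto simp: U_def V_def)
  have e1: "ln (u1 / v1) = ln (U / V) + ln (u1 * V / (v1 * U))"
    using p1 v1 U V by (simp add: ln_div ln_mult)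
  have e2: "ln (u2 / v2) = ln (U / V) + ln (u2 * V / (v2 * U))"
    using p2 v2 U V by (simp add: ln_div ln_mult)
  have i1: "u1 * ln (u1 * V / (v1 * U)) \<ge> u1 * (1 - v1 * U / (u1 * V))"
    using ln_ge_1_minus_inv[of "u1 * V / (v1 * U)"] p1 v1 U V
    by (intro mult_left_mono) auto
  have i2: "u2 * ln (u2 * V / (v2 * U)) \<ge> u2 * (1 - v2 * U / (u2 * V))"
    using ln_ge_1_minus_inv[of "u2 * V / (v2 * U)"] p2 v2 U V
    by (intro mult_left_mono) auto
  have s: "u1 * (1 - v1 * U / (u1 * V)) + u2 * (1 - v2 * U / (u2 * V)) = 0"
  proof -
    have "u1 * (1 - v1 * U / (u1 * V)) = u1 - v1 * U / V" using p1 V by (simp add: field_simps)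
    moreover have "u2 * (1 - v2 * U / (u2 * V)) = u2 - v2 * U / V" using p2 V by (simp add: field_simps)
    moreover have "v1 * U / V + v2 * U / V = U" using V by (simp add: V_def add_divide_distrib[symmetric] distrib_right[symmetric])
    ultimately show ?thesis by (simp add: U_def)
  qed
  have "kl u1 v1 + kl u2 v2 = U * ln (U / V) + (u1 * ln (u1 * V / (v1 * U)) + u2 * ln (u2 * V / (v2 * U)))"
    using p1 p2 by (simp add: kl_def e1 e2 U_def algebra_simps)
  also have "\<dots> \<ge> U * ln (U / V)" using i1 i2 s by linarith
  finally show ?thesis using U by (simp add: kl_def U_def V_def)
qed

lemma logsum:
  assumes "finite S" "S \<noteq> {}" "\<And>i. i \<in> S \<Longrightarrow> u i \<ge> 0" "\<And>i. i \<in> S \<Longrightarrow> v i > 0"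
  shows "kl (sum u S) (sum v S) \<le> (\<Sum>i\<in>S. kl (u i) (v i))"
  using assms
proof (induction S rule: finite_ne_induct)
  case (singleton x) then show ?case by simp
next
  case (insert x F)
  have "kl (sum u (insert x F)) (sum v (insert x F)) = kl (u x + sum u F) (v x + sum v F)"
    using insert by simp
  also have "\<dots> \<le> kl (u x) (v x) + kl (sum u F) (sum v F)"
    using insert by (intro logsum2) (auto intro!: sum_nonneg sum_pos)
  also have "\<dots> \<le> kl (u x) (v x) + (\<Sum>i\<in>F. kl (u i) (v i))"
    using insert by auto
  finally show ?case using insert by simp
qed

lemma kl_nonneg_sum:
  assumes "finite S" "\<And>i. i \<in> S \<Longrightarrow> u i \<ge> 0" "\<And>i. i \<in> S \<Longrightarrow> v i > 0"
    "sum u S = 1" "sum v S = 1"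
  shows "0 \<le> (\<Sum>i\<in>S. kl (u i) (v i))"
proof -
  have "S \<noteq> {}" using assms(4) by auto
  have "kl (sum u S) (sum v S) \<le> (\<Sum>i\<in>S. kl (u i) (v i))"
    by (rule logsum) (use assms \<open>S \<noteq> {}\<close> in auto)
  then show ?thesis using assms(4,5) by (simp add: kl_def)
qed

lemma pinsker_a0:
  assumes "0 \<le> b" "b < (1::real)"
  shows "2 * b^2 \<le> - ln (1 - b)"
proof -
  define f where "f y = - ln (1 - y) - 2 * y^2" for y :: real
  have "f 0 \<le> f b"
  proof (rule DERIV_nonneg_imp_nondecreasing[OF assms(1)])
    fix x assume x: "0 \<le> x" "x \<le> b"
    hence x1: "x < 1" using assms by linarith
    have "(f has_real_derivative (1 / (1 - x) - 4 * x)) (at x)"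
      unfolding f_def
      by (rule derivative_eq_intros refl | use x1 in simp)+
    moreover have "1 / (1 - x) - 4 * x \<ge> 0"
    proof -
      have "4 * x * (1 - x) \<le> 1" using zero_le_power2[of "2*x-1"] by (simp add: power2_eq_square algebra_simps)
      then show ?thesis using x1 by (simp add: field_simps)
    qed
    ultimately show "\<exists>y. (f has_real_derivative y) (at x) \<and> 0 \<le> y" by blast
  qed
  then show ?thesis by (simp add: f_def)
qed

lemma quarter_bound: "4 * x * (1 - x) \<le> (1::real)"
  using zero_le_power2[of "2*x-1"] by (simp add: power2_eq_square algebra_simps)

lemma pinsker_int:
  assumes a: "0 < a" "a < (1::real)" and b: "0 < b" "b < 1"
  shows "2 * (a - b)^2 \<le> a * (ln a - ln b) + (1 - a) * (ln (1 - a) - ln (1 - b))"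
proof -
  define G where "G y = a * (ln a - ln y) + (1 - a) * (ln (1 - a) - ln (1 - y)) - 2 * (a - y)^2" for y :: real
  have D: "(G has_real_derivative ((y - a) * (1 / (y * (1 - y)) - 4))) (at y)" if y: "0 < y" "y < 1" for y :: real
  proof -
    have "(G has_real_derivative (a * (- (1 / y)) + (1 - a) * (- (- 1 / (1 - y))) - 2 * (2 * (a - y) * (- 1)))) (at y)"
      unfolding G_def
      by (rule derivative_eq_intros refl | use y in simp)+
    moreover have "a * (- (1 / y)) + (1 - a) * (- (- 1 / (1 - y))) - 2 * (2 * (a - y) * (- 1))
        = (y - a) * (1 / (y * (1 - y)) - 4)"
      using y by (simp add: field_simps)
    ultimately show ?thesis by simp
  qed
  have q: "1 / (y * (1 - y)) - 4 \<ge> 0" if y: "0 < y" "y < 1" for y :: real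
  proof -
    have "4 * y * (1 - y) \<le> (1::real)" by (rule quarter_bound)
    then show ?thesis using y by (simp add: field_simps)
  qed
  have Ga: "G a = 0" by (simp add: G_def)
  have "G a \<le> G b"
  proof (cases "a \<le> b")
    case True
    show ?thesis
    proof (rule DERIV_nonneg_imp_nondecreasing[OF True])
      fix x assume x: "a \<le> x" "x \<le> b"
      hence x0: "0 < x" "x < 1" using a b by linarith+
      show "\<exists>y. (G has_real_derivative y) (at x) \<and> 0 \<le> y"
        using D[OF x0] q[OF x0] x(1) by (intro exI[of _ "(x - a) * (1 / (x * (1 - x)) - 4)"]) auto
    qed
  next
    case False
    hence ba: "b \<le> a" by simp
    have "G a \<le> G b"
    proof (rule DERIV_nonpos_imp_nonincreasing[OF ba])
      fix x assume x: "b \<le> x" "x \<le> a"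
      hence x0: "0 < x" "x < 1" using a b by linarith+
      have "(x - a) * (1 / (x * (1 - x)) - 4) \<le> 0"
        using q[OF x0] x(2) by (simp add: mult_nonpos_nonneg)
      then show "\<exists>y. (G has_real_derivative y) (at x) \<and> y \<le> 0"
        using D[OF x0] by blast
    qed
    then show ?thesis .
  qed
  then show ?thesis using Ga by (simp add: G_def)
qed

lemma pinsker2:
  assumes a: "0 \<le> a" "a \<le> (1::real)" and b: "0 < b" "b < 1"
  shows "2 * (a - b)^2 \<le> kl a b + kl (1 - a) (1 - b)"
proof -
  consider "a = 0" | "a = 1" | "0 < a \<and> a < 1" using a by linarith
  then show ?thesis
  proof cases
    case 1
    then show ?thesis using pinsker_a0[of b] b by (simp add: kl_def ln_div)
  next
    case 2
    then show ?thesis using pinsker_a0[of "1 - b"] b by (simp add: kl_def ln_div power2_commute)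
  next
    case 3
    then show ?thesis using pinsker_int[of a b] b by (simp add: kl_def ln_div)
  qed
qed

lemma pinsker:
  assumes S: "finite S" and u: "\<And>i. i \<in> S \<Longrightarrow> u i \<ge> 0" and v: "\<And>i. i \<in> S \<Longrightarrow> v i > 0"
    and su: "sum u S = 1" and sv: "sum v S = 1"
  shows "(\<Sum>i\<in>S. \<bar>u i - v i\<bar>)^2 \<le> 2 * (\<Sum>i\<in>S. kl (u i) (v i))"
proof -
  define A where "A = {i\<in>S. u i \<ge> v i}"
  define B where "B = S - A"
  have AS: "A \<subseteq> S" and fA: "finite A" and fB: "finite B" using S by (auto simp: A_def B_def)
  have SAB: "S = A \<union> B" "A \<inter> B = {}" by (auto simp: A_def B_def)
  define a where "a = sum u A"
  define b where "b = sum v A"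
  have uB: "sum u B = 1 - a" using su fA fB SAB by (simp add: a_def sum.union_disjoint)
  have vB: "sum v B = 1 - b" using sv fA fB SAB by (simp add: b_def sum.union_disjoint)
  have absA: "(\<Sum>i\<in>A. \<bar>u i - v i\<bar>) = a - b"
    by (simp add: a_def b_def sum_subtractf[symmetric], rule sum.cong) (auto simp: A_def)
  have absB: "(\<Sum>i\<in>B. \<bar>u i - v i\<bar>) = (1 - b) - (1 - a)"
    by (simp add: uB[symmetric] vB[symmetric] sum_subtractf[symmetric], rule sum.cong) (auto simp: B_def A_def)
  have tot: "(\<Sum>i\<in>S. \<bar>u i - v i\<bar>) = 2 * (a - b)"
    using fA fB SAB absA absB by (simp add: sum.union_disjoint)
  have klS: "(\<Sum>i\<in>S. kl (u i) (v i)) = (\<Sum>i\<in>A. kl (u i) (v i)) + (\<Sum>i\<in>B. kl (u i) (v i))"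
    using fA fB SAB by (simp add: sum.union_disjoint)
  have nn: "0 \<le> (\<Sum>i\<in>S. kl (u i) (v i))" using kl_nonneg_sum[OF S u v su sv] by auto
  show ?thesis
  proof (cases "A = {} \<or> B = {}")
    case True
    hence "a = b"
    proof
      assume "A = {}" then show ?thesis by (simp add: a_def b_def)
    next
      assume "B = {}" then show ?thesis using uB vB by simp
    qed
    then show ?thesis using tot nn by simp
  next
    case False
    have b0: "b > 0" unfolding b_def using False fA v AS by (intro sum_pos) auto
    have b1: "1 - b > 0" unfolding vB[symmetric] using False fB v by (intro sum_pos) (auto simp: B_def)
    have a0: "a \<ge> 0" unfolding a_def using u AS by (intro sum_nonneg) auto
    have a1: "1 - a \<ge> 0" unfolding uB[symmetric] using u by (intro sum_nonneg) (auto simp: B_def)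
    have kA: "kl a b \<le> (\<Sum>i\<in>A. kl (u i) (v i))"
      unfolding a_def b_def using False fA u v AS by (intro logsum) auto
    have kB: "kl (1 - a) (1 - b) \<le> (\<Sum>i\<in>B. kl (u i) (v i))"
      unfolding uB[symmetric] vB[symmetric] using False fB u v by (intro logsum) (auto simp: B_def)
    have "2 * (a - b)^2 \<le> kl a b + kl (1 - a) (1 - b)" using pinsker2[of a b] a0 a1 b0 b1 by simp
    moreover have "(2 * (a - b))^2 = 4 * (a - b)^2" by (simp add: power2_eq_square algebra_simps)
    ultimately show ?thesis using tot klS kA kB by simp
  qed
qed

definition dd :: "real \<Rightarrow> real \<Rightarrow> real" where
  "dd p x = kl x p + kl (1 - x) (1 - p)"

lemma kl_convex:
  assumes l: "0 \<le> l" "l \<le> 1" and x: "0 \<le> x" and y: "0 \<le> y" and p: "0 < p"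
  shows "kl (l * x + (1 - l) * y) p \<le> l * kl x p + (1 - l) * kl y p"
proof -
  consider "l = 0" | "l = 1" | "0 < l \<and> l < 1" using l by linarith
  then show ?thesis
  proof cases
    case 3
    have "kl (l * x + (1 - l) * y) p = kl (l * x + (1 - l) * y) (l * p + (1 - l) * p)"
      by (simp add: algebra_simps)
    also have "\<dots> \<le> kl (l * x) (l * p) + kl ((1 - l) * y) ((1 - l) * p)"
      using 3 x y p by (intro logsum2) auto
    also have "\<dots> = l * kl x p + (1 - l) * kl y p"
      using 3 p by (simp add: kl_scale)
    finally show ?thesis .
  qed auto
qed

lemma dd_convex:
  assumes l: "0 \<le> l" "l \<le> 1" and x: "0 < l \<Longrightarrow> 0 \<le> x \<and> x \<le> 1" and y: "l < 1 \<Longrightarrow> 0 \<le> y \<and> y \<le> 1"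
    and p: "0 < p" "p < 1"
  shows "dd p (l * x + (1 - l) * y) \<le> l * dd p x + (1 - l) * dd p y"
proof -
  consider "l = 0" | "l = 1" | "0 < l \<and> l < 1" using l by linarith
  then show ?thesis
  proof cases
    case 3
    have x': "0 \<le> x" "x \<le> 1" and y': "0 \<le> y" "y \<le> 1" using x y 3 by auto
    have e: "1 - (l * x + (1 - l) * y) = l * (1 - x) + (1 - l) * (1 - y)" by (simp add: algebra_simps)
    have "kl (l * x + (1 - l) * y) p \<le> l * kl x p + (1 - l) * kl y p"
      using kl_convex[of l x y p] l x' y' p by simp
    moreover have "kl (l * (1 - x) + (1 - l) * (1 - y)) (1 - p) \<le> l * kl (1 - x) (1 - p) + (1 - l) * kl (1 - y) (1 - p)"
      using kl_convex[of l "1 - x" "1 - y" "1 - p"] l x' y' p by simp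
    ultimately show ?thesis unfolding dd_def e by (simp add: algebra_simps)
  qed auto
qed

lemma pascal_sum:
  fixes F :: "nat \<Rightarrow> real"
  shows "(\<Sum>j\<le>Suc t. real (Suc t choose j) * F j) = (\<Sum>j\<le>t. real (t choose j) * (F j + F (Suc j)))"
proof -
  have "(\<Sum>j\<le>Suc t. real (Suc t choose j) * F j) = F 0 + (\<Sum>j\<le>t. real (Suc t choose Suc j) * F (Suc j))"
    by (subst sum.atMost_Suc_shift) simp
  also have "\<dots> = F 0 + (\<Sum>j\<le>t. real (t choose j) * F (Suc j)) + (\<Sum>j\<le>t. real (t choose Suc j) * F (Suc j))"
    by (simp add: sum.distrib algebra_simps)
  also have "(\<Sum>j\<le>t. real (t choose Suc j) * F (Suc j)) = (\<Sum>j\<le>Suc t. real (t choose j) * F j) - F 0"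
    by (simp only: sum.atMost_Suc_shift[of _ t]) simp
  also have "(\<Sum>j\<le>Suc t. real (t choose j) * F j) = (\<Sum>j\<le>t. real (t choose j) * F j)"
    by simp
  finally show ?thesis by (simp add: sum.distrib algebra_simps)
qed

locale hanl =
  fixes N k0 :: nat and p :: real
  assumes k0N: "k0 \<le> N" and p0: "0 < p" and p1: "p < 1"
begin

definition hyp :: "nat \<Rightarrow> nat \<Rightarrow> real" where
  "hyp t j = (if j \<le> k0 then real (N - t choose (k0 - j)) else 0) / real (N choose k0)"

definition bin :: "nat \<Rightarrow> nat \<Rightarrow> real" where
  "bin t j = p ^ j * (1 - p) ^ (t - j)"

definition rr :: "nat \<Rightarrow> nat \<Rightarrow> real" where
  "rr t j = (real k0 - real j) / (real N - real t)"

definition aa :: "nat \<Rightarrow> real" where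
  "aa t = (\<Sum>j\<le>t. real (t choose j) * kl (hyp t j) (bin t j))"

definition del :: "nat \<Rightarrow> real" where
  "del t = (\<Sum>j\<le>t. real (t choose j) * (hyp t j * dd p (rr t j)))"

lemma Nk0_pos: "real (N choose k0) > 0" using k0N by simp

lemma hyp_nonneg: "hyp t j \<ge> 0" by (simp add: hyp_def)

lemma bin_pos: "bin t j > 0" using p0 p1 by (simp add: bin_def)

lemma hyp_pos_D: assumes "hyp t j > 0" shows "j \<le> k0" "k0 - j \<le> N - t"
proof -
  show j: "j \<le> k0" using assms by (simp add: hyp_def split: if_splits)
  have "real (N - t choose (k0 - j)) > 0" using assms j Nk0_pos by (simp add: hyp_def zero_less_divide_iff)
  then show "k0 - j \<le> N - t" by simp
qed

lemma rr_range: assumes "hyp t j > 0" "t < N" shows "0 \<le> rr t j" "rr t j \<le> 1"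
  using hyp_pos_D[OF assms(1)] assms(2) by (auto simp: rr_def)

lemma hyp_step1: assumes "t < N" shows "hyp (Suc t) (Suc j) = hyp t j * rr t j"
proof (cases "Suc j \<le> k0")
  case True
  have e: "(k0 - j) * (N - t choose (k0 - j)) = (N - t) * ((N - t - 1) choose (k0 - j - 1))"
    using True by (intro times_binomial_minus1_eq) simp
  have F: "real (k0 - j) * real (N - t choose (k0 - j)) = real (N - t) * real ((N - t - 1) choose (k0 - j - 1))"
    using arg_cong[OF e, of real] by (simp only: of_nat_mult)
  have d: "real (N - t) \<noteq> 0" using assms by simp
  have Y: "real ((N - t - 1) choose (k0 - j - 1)) = real (N - t choose (k0 - j)) * (real (k0 - j) / real (N - t))"
  proof -
    have "real ((N - t - 1) choose (k0 - j - 1)) = real (N - t) * real ((N - t - 1) choose (k0 - j - 1)) / real (N - t)"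
      using d by simp
    also have "\<dots> = real (k0 - j) * real (N - t choose (k0 - j)) / real (N - t)" by (simp only: F)
    finally show ?thesis by simp
  qed
  have r: "real (k0 - j) / real (N - t) = rr t j" using True assms by (simp add: rr_def of_nat_diff)
  have i1: "N - Suc t = N - t - 1" and i2: "k0 - Suc j = k0 - j - 1" by auto
  have Y': "real ((N - Suc t) choose (k0 - Suc j)) = real (N - t choose (k0 - j)) * rr t j"
    using Y r unfolding i1[symmetric] i2[symmetric] by simp
  have "j \<le> k0" using True by simp
  then show ?thesis unfolding hyp_def using True Y' by simp
next
  case False
  then show ?thesis
  proof (cases "j = k0")
    case True then show ?thesis by (simp add: hyp_def rr_def)
  next
    case False
    then show ?thesis using \<open>\<not> Suc j \<le> k0\<close> by (simp add: hyp_def)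
  qed
qed

lemma hyp_step0: assumes "t < N" shows "hyp (Suc t) j = hyp t j * (1 - rr t j)"
proof (cases "j \<le> k0")
  case True
  show ?thesis
  proof (cases "k0 - j \<le> N - t")
    case le: True
    have e: "(N - t - (k0 - j)) * (N - t choose (k0 - j)) = (N - t) * ((N - t - 1) choose (k0 - j))"
      by (rule binomial_absorb_comp)
    have F: "real (N - t - (k0 - j)) * real (N - t choose (k0 - j)) = real (N - t) * real ((N - t - 1) choose (k0 - j))"
      using arg_cong[OF e, of real] by (simp only: of_nat_mult)
    have d: "real (N - t) \<noteq> 0" using assms by simp
    have r: "real (N - t - (k0 - j)) / real (N - t) = 1 - rr t j"
    proof -
      have "real (N - t - (k0 - j)) = real N - real t - real k0 + real j" using le True assms by (simp add: of_nat_diff)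
      moreover have "real (N - t) = real N - real t" using assms by (simp add: of_nat_diff)
      moreover have "real N - real t \<noteq> 0" using assms by simp
      ultimately show ?thesis unfolding rr_def by (simp add: field_simps)
    qed
    have Y: "real ((N - t - 1) choose (k0 - j)) = real (N - t choose (k0 - j)) * (1 - rr t j)"
    proof -
      have "real ((N - t - 1) choose (k0 - j)) = real (N - t) * real ((N - t - 1) choose (k0 - j)) / real (N - t)"
        using d by simp
      also have "\<dots> = real (N - t - (k0 - j)) * real (N - t choose (k0 - j)) / real (N - t)" by (simp only: F)
      also have "\<dots> = real (N - t choose (k0 - j)) * (real (N - t - (k0 - j)) / real (N - t))" by simp
      finally show ?thesis by (simp only: r)
    qed
    have i1: "N - Suc t = N - t - 1" by auto
    have Y': "real ((N - Suc t) choose (k0 - j)) = real (N - t choose (k0 - j)) * (1 - rr t j)"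
      using Y unfolding i1[symmetric] by simp
    show ?thesis unfolding hyp_def using True Y' by simp
  next
    case False
    then show ?thesis using True by (simp add: hyp_def binomial_eq_0)
  qed
next
  case False
  then show ?thesis by (simp add: hyp_def)
qed

lemma bin_step1: "j \<le> t \<Longrightarrow> bin (Suc t) (Suc j) = bin t j * p"
  by (simp add: bin_def)

lemma bin_step0: "j \<le> t \<Longrightarrow> bin (Suc t) j = bin t j * (1 - p)"
  by (simp add: bin_def Suc_diff_le)

lemma bin_high: "bin (Suc t) (Suc t) = bin t t * p" by (simp add: bin_def)


lemma ln_split: "(a::real) > 0 \<Longrightarrow> b > 0 \<Longrightarrow> c > 0 \<Longrightarrow> d > 0 \<Longrightarrow> ln (a * c / (b * d)) = ln (a / b) + ln (c / d)"
proof -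
  assume "a > 0" "b > 0" "c > 0" "d > 0"
  moreover have "a * c / (b * d) = (a / b) * (c / d)" by (rule times_divide_times_eq[symmetric])
  ultimately show ?thesis using ln_mult[of "a/b" "c/d"] by simp
qed

lemma kl_split1:
  assumes h: "h > 0" and g: "g > 0" and r: "0 \<le> r" and p: "pp > 0"
  shows "kl (h * r) (g * pp) = h * r * ln (h / g) + h * kl r pp"
proof (cases "r = 0")
  case True then show ?thesis by (simp add: kl_def)
next
  case False
  hence r0: "r > 0" using r by simp
  have "kl (h * r) (g * pp) = h * r * ln (h * r / (g * pp))" using h r0 by (simp add: kl_def)
  also have "ln (h * r / (g * pp)) = ln (h / g) + ln (r / pp)" using h g r0 p by (rule ln_split)
  finally show ?thesis using r0 by (simp add: kl_def algebra_simps)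
qed

lemma kl_split:
  assumes h: "h \<ge> 0" and g: "g > 0" and r: "h > 0 \<Longrightarrow> 0 \<le> r \<and> r \<le> 1"
  shows "kl (h * r) (g * p) + kl (h * (1 - r)) (g * (1 - p)) = kl h g + h * dd p r"
proof (cases "h = 0")
  case True then show ?thesis by (simp add: kl_def)
next
  case False
  hence h0: "h > 0" using h by simp
  have r01: "0 \<le> r" "r \<le> 1" using r h0 by auto
  have A: "kl (h * r) (g * p) = h * r * ln (h / g) + h * kl r p"
    using h0 g p0 r01 by (intro kl_split1) auto
  have B: "kl (h * (1 - r)) (g * (1 - p)) = h * (1 - r) * ln (h / g) + h * kl (1 - r) (1 - p)"
    using kl_split1[of h g "1 - r" "1 - p"] h0 g p1 r01 by simp
  have C: "kl h g = h * ln (h / g)" using h0 by (simp add: kl_def)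
  show ?thesis unfolding A B C dd_def by (simp add: algebra_simps)
qed

lemma aa_step: assumes "t < N" shows "aa (Suc t) = aa t + del t"
proof -
  have "aa (Suc t) = (\<Sum>j\<le>t. real (t choose j) * (kl (hyp (Suc t) j) (bin (Suc t) j) + kl (hyp (Suc t) (Suc j)) (bin (Suc t) (Suc j))))"
    unfolding aa_def by (rule pascal_sum)
  also have "\<dots> = (\<Sum>j\<le>t. real (t choose j) * (kl (hyp t j) (bin t j) + hyp t j * dd p (rr t j)))"
  proof (rule sum.cong[OF refl])
    fix j assume j: "j \<in> {..t}"
    have "kl (hyp (Suc t) j) (bin (Suc t) j) + kl (hyp (Suc t) (Suc j)) (bin (Suc t) (Suc j))
        = kl (hyp t j * rr t j) (bin t j * p) + kl (hyp t j * (1 - rr t j)) (bin t j * (1 - p))"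
      using j by (simp only: hyp_step0[OF assms, of j] hyp_step1[OF assms, of j] bin_step0[of j t] bin_step1[of j t] atMost_iff)
    also have "\<dots> = kl (hyp t j) (bin t j) + hyp t j * dd p (rr t j)"
      using hyp_nonneg bin_pos rr_range assms by (intro kl_split) auto
    finally show "real (t choose j) * (kl (hyp (Suc t) j) (bin (Suc t) j) + kl (hyp (Suc t) (Suc j)) (bin (Suc t) (Suc j)))
       = real (t choose j) * (kl (hyp t j) (bin t j) + hyp t j * dd p (rr t j))" by simp
  qed
  also have "\<dots> = aa t + del t" unfolding aa_def del_def by (simp add: sum.distrib algebra_simps)
  finally show ?thesis .
qed

lemma rr_identity:
  assumes "Suc t < N"
  shows "(1 - rr t j) * rr (Suc t) j + (1 - (1 - rr t j)) * rr (Suc t) (Suc j) = rr t j"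
proof -
  define a where "a = real k0 - real j"
  define D where "D = real N - real t"
  have D1: "D - 1 \<noteq> 0" "D \<noteq> 0" using assms by (auto simp: D_def)
  have e: "rr t j = a / D" "rr (Suc t) j = a / (D - 1)" "rr (Suc t) (Suc j) = (a - 1) / (D - 1)"
    by (auto simp: rr_def a_def D_def algebra_simps)
  have o: "1 - a/D = (D - a)/D" using D1 by (simp add: diff_divide_distrib)
  have "(1 - a/D) * (a/(D-1)) + (1 - (1 - a/D)) * ((a-1)/(D-1)) = (D - a)*a / (D*(D-1)) + a*(a-1) / (D*(D-1))"
  proof -
    have "1 - (1 - a/D) = a/D" by simp
    then show ?thesis unfolding o by simp
  qed
  also have "\<dots> = ((D - a)*a + a*(a-1)) / (D*(D-1))" by (simp add: add_divide_distrib)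
  also have "\<dots> = (a*(D-1)) / (D*(D-1))" by (simp add: algebra_simps)
  also have "\<dots> = a / D" using D1 by simp
  finally show ?thesis unfolding e .
qed

lemma del_mono1: assumes "Suc t < N" shows "del t \<le> del (Suc t)"
proof -
  have "del (Suc t) = (\<Sum>j\<le>t. real (t choose j) * (hyp (Suc t) j * dd p (rr (Suc t) j) + hyp (Suc t) (Suc j) * dd p (rr (Suc t) (Suc j))))"
    unfolding del_def by (rule pascal_sum)
  also have "\<dots> = (\<Sum>j\<le>t. real (t choose j) * (hyp t j * ((1 - rr t j) * dd p (rr (Suc t) j) + (1 - (1 - rr t j)) * dd p (rr (Suc t) (Suc j)))))"
  proof (intro sum.cong refl)
    fix j
    show "real (t choose j) * (hyp (Suc t) j * dd p (rr (Suc t) j) + hyp (Suc t) (Suc j) * dd p (rr (Suc t) (Suc j))) =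
         real (t choose j) * (hyp t j * ((1 - rr t j) * dd p (rr (Suc t) j) + (1 - (1 - rr t j)) * dd p (rr (Suc t) (Suc j))))"
      using assms by (simp only: hyp_step0[of t j] hyp_step1[of t j] Suc_lessD) (simp add: algebra_simps)
  qed
  also have "\<dots> \<ge> (\<Sum>j\<le>t. real (t choose j) * (hyp t j * dd p (rr t j)))"
  proof (rule sum_mono)
    fix j assume j: "j \<in> {..t}"
    show "real (t choose j) * (hyp t j * dd p (rr t j)) \<le> real (t choose j) * (hyp t j * ((1 - rr t j) * dd p (rr (Suc t) j) + (1 - (1 - rr t j)) * dd p (rr (Suc t) (Suc j))))"
    proof (cases "hyp t j = 0")
      case True then show ?thesis by simp
    next
      case False
      hence hp: "hyp t j > 0" using hyp_nonneg[of t j] by simp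
      note D = hyp_pos_D[OF hp]
      have r: "0 \<le> rr t j" "rr t j \<le> 1" using rr_range[OF hp] assms by auto
      have Dp: "real N - real (Suc t) > 0" using assms by simp
      have Dt: "real N - real t > 0" using assms by simp
      have x: "0 \<le> rr (Suc t) j \<and> rr (Suc t) j \<le> 1" if "0 < 1 - rr t j"
      proof -
        have "rr t j < 1" using that by simp
        hence "real k0 - real j < real N - real t" using Dt by (simp add: rr_def divide_less_eq_1)
        hence "real (k0 + t) < real (N + j)" by simp
        hence "k0 + t < N + j" by (simp only: of_nat_less_iff)
        hence "real k0 + real (Suc t) \<le> real N + real j" by linarith
        hence "real k0 - real j \<le> real N - real (Suc t)" by linarith
        moreover have "real k0 - real j \<ge> 0" using D by simp
        ultimately show ?thesis using Dp by (simp add: rr_def divide_le_eq_1)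
      qed
      have y: "0 \<le> rr (Suc t) (Suc j) \<and> rr (Suc t) (Suc j) \<le> 1" if "1 - rr t j < 1"
      proof -
        have "rr t j > 0" using that by simp
        hence "real k0 - real j > 0" using Dt by (simp add: rr_def zero_less_divide_iff)
        hence "j < k0" by simp
        hence a0: "real k0 - real (Suc j) \<ge> 0" by simp
        have "k0 + t \<le> N + j" using D assms by arith
        hence "real k0 - real (Suc j) \<le> real N - real (Suc t)" by simp
        then show ?thesis using Dp a0 by (simp add: rr_def divide_le_eq_1)
      qed
      have "dd p (rr t j) \<le> (1 - rr t j) * dd p (rr (Suc t) j) + (1 - (1 - rr t j)) * dd p (rr (Suc t) (Suc j))"
        using dd_convex[of "1 - rr t j" "rr (Suc t) j" "rr (Suc t) (Suc j)" p] r x y p0 p1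
        unfolding rr_identity[OF assms] by simp
      then show ?thesis using hp by (intro mult_left_mono) auto
    qed
  qed
  finally show ?thesis unfolding del_def .
qed

lemma del_mono: assumes "t \<le> s" "s < N" shows "del t \<le> del s"
  using assms
proof (induction s rule: dec_induct)
  case base then show ?case by simp
next
  case (step s)
  then show ?case using del_mono1[of s] by simp
qed

lemma aa0: "aa 0 = 0"
  using Nk0_pos by (simp add: aa_def hyp_def bin_def kl_def)

lemma aa_sum: "t \<le> N \<Longrightarrow> aa t = (\<Sum>s<t. del s)"
proof (induction t)
  case 0 then show ?case by (simp add: aa0)
next
  case (Suc t)
  then show ?case using aa_step[of t] by simp
qed

lemma han: assumes "n \<le> N" shows "real N * aa n \<le> real n * aa N"
proof (cases "n = N")
  case True then show ?thesis by simp
next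
  case False
  hence nN: "n < N" using assms by simp
  define A where "A = (\<Sum>s<n. del s)"
  define B where "B = (\<Sum>s\<in>{n..<N}. del s)"
  have aN: "aa N = A + B" unfolding aa_sum[OF order_refl] A_def B_def
    using nN by (simp add: sum.atLeastLessThan_concat[symmetric] lessThan_atLeast0)
  have an: "aa n = A" unfolding A_def using aa_sum assms by simp
  have A: "A \<le> real n * del n"
  proof -
    have "A \<le> (\<Sum>s<n. del n)" unfolding A_def using nN by (intro sum_mono del_mono) auto
    then show ?thesis by simp
  qed
  have B: "B \<ge> real (N - n) * del n"
  proof -
    have "B \<ge> (\<Sum>s\<in>{n..<N}. del n)" unfolding B_def by (intro sum_mono del_mono) auto
    then show ?thesis by simp
  qed
  have "real N * A = real n * A + real (N - n) * A" using nN by (simp add: of_nat_diff algebra_simps)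
  also have "real (N - n) * A \<le> real (N - n) * (real n * del n)" using A by (intro mult_left_mono) auto
  also have "real (N - n) * (real n * del n) = real n * (real (N - n) * del n)" by simp
  also have "\<dots> \<le> real n * B" using B by (intro mult_left_mono) auto
  finally show ?thesis using aN an by (simp add: algebra_simps)
qed

end

definition np :: "'a set \<Rightarrow> ('a \<Rightarrow> real) \<Rightarrow> nat" where
  "np S \<phi> = card {x\<in>S. \<phi> x = 1}"

definition spin_of :: "'a set \<Rightarrow> 'a set \<Rightarrow> ('a \<Rightarrow> real)" where
  "spin_of S B = (\<lambda>x\<in>S. if x \<in> B then 1 else -1)"

lemma spins_val: "\<phi> \<in> spins S \<Longrightarrow> x \<in> S \<Longrightarrow> \<phi> x = 1 \<or> \<phi> x = -1"
  by (auto simp: spins_def PiE_def)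

lemma spins_out: "\<phi> \<in> spins S \<Longrightarrow> x \<notin> S \<Longrightarrow> \<phi> x = undefined"
  by (auto simp: spins_def PiE_def extensional_def)

lemma spin_of_in: "spin_of S B \<in> spins S"
  by (auto simp: spin_of_def spins_def)

lemma finite_spins: "finite S \<Longrightarrow> finite (spins S)"
  by (simp add: spins_def finite_PiE)

lemma spins_bij: "bij_betw (\<lambda>\<phi>. {x\<in>S. \<phi> x = 1}) (spins S) (Pow S)"
proof (rule bij_betw_byWitness[where f' = "spin_of S"])
  show "\<forall>\<phi>\<in>spins S. spin_of S {x \<in> S. \<phi> x = 1} = \<phi>"
  proof
    fix \<phi> assume h: "\<phi> \<in> spins S"
    show "spin_of S {x \<in> S. \<phi> x = 1} = \<phi>"
    proof
      fix x show "spin_of S {x \<in> S. \<phi> x = 1} x = \<phi> x"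
        using spins_val[OF h, of x] spins_out[OF h, of x] by (auto simp: spin_of_def)
    qed
  qed
  show "\<forall>B\<in>Pow S. {x \<in> S. spin_of S B x = 1} = B" by (auto simp: spin_of_def)
  show "(\<lambda>\<phi>. {x \<in> S. \<phi> x = 1}) ` spins S \<subseteq> Pow S" by auto
  show "spin_of S ` Pow S \<subseteq> spins S" using spin_of_in by auto
qed

lemma sum_Pow_card:
  fixes F :: "nat \<Rightarrow> real"
  assumes "finite S"
  shows "(\<Sum>B\<in>Pow S. F (card B)) = (\<Sum>k\<le>card S. real (card S choose k) * F k)"
proof -
  have "(\<Sum>B\<in>Pow S. F (card B)) = (\<Sum>k\<le>card S. \<Sum>B\<in>{B. B \<in> Pow S \<and> card B = k}. F (card B))"
    using assms by (intro sum.group[symmetric]) (auto intro: card_mono)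
  also have "\<dots> = (\<Sum>k\<le>card S. real (card S choose k) * F k)"
  proof (rule sum.cong[OF refl])
    fix k
    have "{B. B \<in> Pow S \<and> card B = k} = {B. B \<subseteq> S \<and> card B = k}" by auto
    then show "(\<Sum>B\<in>{B. B \<in> Pow S \<and> card B = k}. F (card B)) = real (card S choose k) * F k"
      using n_subsets[OF assms, of k] by simp
  qed
  finally show ?thesis .
qed

lemma sum_spins_np:
  fixes F :: "nat \<Rightarrow> real"
  assumes "finite S"
  shows "(\<Sum>\<phi>\<in>spins S. F (np S \<phi>)) = (\<Sum>k\<le>card S. real (card S choose k) * F k)"
proof -
  have "(\<Sum>\<phi>\<in>spins S. F (np S \<phi>)) = (\<Sum>B\<in>Pow S. F (card B))"
    unfolding np_def by (rule sum.reindex_bij_betw[OF spins_bij, of "\<lambda>B. F (card B)"])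
  then show ?thesis using sum_Pow_card[OF assms] by simp
qed


definition merge :: "'a set \<Rightarrow> ('a \<Rightarrow> real) \<Rightarrow> ('a \<Rightarrow> real) \<Rightarrow> ('a \<Rightarrow> real)" where
  "merge I \<psi> \<chi> = (\<lambda>x. if x \<in> I then \<psi> x else \<chi> x)"

lemma proj_spins: "I \<subseteq> S \<Longrightarrow> \<phi> \<in> spins S \<Longrightarrow> proj I \<phi> \<in> spins I"
  by (auto simp: proj_def spins_def)

lemma np_merge:
  assumes fin: "finite S" and IS: "I \<subseteq> S"
  shows "np S (merge I \<psi> \<chi>) = np I \<psi> + np (S - I) \<chi>"
proof -
  have "{x\<in>S. merge I \<psi> \<chi> x = 1} = {x\<in>I. \<psi> x = 1} \<union> {x\<in>S - I. \<chi> x = 1}"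
    using IS by (auto simp: merge_def)
  moreover have "finite I" using fin IS finite_subset by blast
  ultimately show ?thesis unfolding np_def using fin
    by (subst card_Un_disjoint[symmetric]) auto
qed

lemma sum_fiber:
  fixes F :: "nat \<Rightarrow> real"
  assumes fin: "finite S" and IS: "I \<subseteq> S" and psi: "\<psi> \<in> spins I"
  shows "(\<Sum>\<phi>\<in>{\<phi>\<in>spins S. proj I \<phi> = \<psi>}. F (np S \<phi>))
       = (\<Sum>k\<le>card S - card I. real (card S - card I choose k) * F (np I \<psi> + k))"
proof -
  have "(\<Sum>\<phi>\<in>{\<phi>\<in>spins S. proj I \<phi> = \<psi>}. F (np S \<phi>)) = (\<Sum>\<chi>\<in>spins (S - I). F (np I \<psi> + np (S - I) \<chi>))"
  proof (rule sum.reindex_bij_witness[where j = "\<lambda>\<phi>. restrict \<phi> (S - I)" and i = "merge I \<psi>"])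
    fix \<phi> assume a: "\<phi> \<in> {\<phi>\<in>spins S. proj I \<phi> = \<psi>}"
    hence a1: "\<phi> \<in> spins S" and a2: "restrict \<phi> I = \<psi>" by (auto simp: proj_def)
    show "merge I \<psi> (restrict \<phi> (S - I)) = \<phi>"
    proof
      fix x show "merge I \<psi> (restrict \<phi> (S - I)) x = \<phi> x"
        using a2[symmetric] spins_out[OF a1, of x] IS by (auto simp: merge_def)
    qed
    show "restrict \<phi> (S - I) \<in> spins (S - I)" using a1 by (auto simp: spins_def)
    have "np S \<phi> = np S (merge I \<psi> (restrict \<phi> (S - I)))" using \<open>merge I \<psi> (restrict \<phi> (S - I)) = \<phi>\<close> by simp
    then show "F (np I \<psi> + np (S - I) (restrict \<phi> (S - I))) = F (np S \<phi>)"
      using np_merge[OF fin IS] by simp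
  next
    fix \<chi> assume b: "\<chi> \<in> spins (S - I)"
    show "restrict (merge I \<psi> \<chi>) (S - I) = \<chi>"
    proof
      fix x show "restrict (merge I \<psi> \<chi>) (S - I) x = \<chi> x"
        using spins_out[OF b, of x] by (auto simp: merge_def)
    qed
    have "merge I \<psi> \<chi> \<in> spins S"
      using psi b IS unfolding spins_def merge_def by (auto simp: PiE_def extensional_def Pi_def)
    moreover have "proj I (merge I \<psi> \<chi>) = \<psi>"
    proof
      fix x show "proj I (merge I \<psi> \<chi>) x = \<psi> x"
        using spins_out[OF psi, of x] by (auto simp: merge_def proj_def)
    qed
    ultimately show "merge I \<psi> \<chi> \<in> {\<phi>\<in>spins S. proj I \<phi> = \<psi>}" by simp
  qed
  also have "\<dots> = (\<Sum>k\<le>card (S - I). real (card (S - I) choose k) * F (np I \<psi> + k))"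
    using fin by (intro sum_spins_np) auto
  also have "card (S - I) = card S - card I" using fin IS by (simp add: card_Diff_subset finite_subset)
  finally show ?thesis .
qed

lemma expect_marg:
  fixes F :: "nat \<Rightarrow> real"
  assumes fin: "finite S" and IS: "I \<subseteq> S" and X: "\<And>\<phi>. \<phi> \<in> spins S \<Longrightarrow> X \<phi> = F (np S \<phi>)"
  shows "expect S X (g \<circ> proj I)
       = (\<Sum>\<psi>\<in>spins I. g \<psi> * (\<Sum>k\<le>card S - card I. real (card S - card I choose k) * F (np I \<psi> + k)))"
proof -
  have fI: "finite I" using fin IS finite_subset by blast
  have "expect S X (g \<circ> proj I) = (\<Sum>\<phi>\<in>spins S. F (np S \<phi>) * g (proj I \<phi>))"
    unfolding expect_def using X by (intro sum.cong) auto
  also have "\<dots> = (\<Sum>\<psi>\<in>spins I. \<Sum>\<phi>\<in>{\<phi>. \<phi> \<in> spins S \<and> proj I \<phi> = \<psi>}. F (np S \<phi>) * g (proj I \<phi>))"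
    using fin fI proj_spins[OF IS] by (intro sum.group[symmetric]) (auto simp: finite_spins)
  also have "\<dots> = (\<Sum>\<psi>\<in>spins I. g \<psi> * (\<Sum>\<phi>\<in>{\<phi>\<in>spins S. proj I \<phi> = \<psi>}. F (np S \<phi>)))"
    by (intro sum.cong refl) (auto simp: sum_distrib_left algebra_simps intro!: sum.cong)
  also have "\<dots> = (\<Sum>\<psi>\<in>spins I. g \<psi> * (\<Sum>k\<le>card S - card I. real (card S - card I choose k) * F (np I \<psi> + k)))"
    using sum_fiber[OF fin IS] by (intro sum.cong refl) auto
  finally show ?thesis .
qed

locale modl =
  fixes N k0 :: nat
  assumes k0p: "0 < k0" and k0N': "k0 < N"
begin

definition pp :: real where "pp = real k0 / real N"

lemma pp0: "0 < pp" and pp1: "pp < 1"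
  using k0p k0N' by (auto simp: pp_def)

sublocale H: hanl N k0 pp
  using k0N' pp0 pp1 by unfold_locales auto

definition bn :: "nat \<Rightarrow> real" where
  "bn k = real (N choose k) * pp ^ k * (1 - pp) ^ (N - k)"

lemma bn_nonneg: "bn k \<ge> 0" using pp0 pp1 by (simp add: bn_def)

lemma bn_k0_pos: "bn k0 > 0" using pp0 pp1 k0N' by (simp add: bn_def)

lemma bn_sum: "(\<Sum>k\<le>N. bn k) = 1"
  using binomial_ring[of pp "1 - pp" N] by (simp add: bn_def)

lemma aN: "H.aa N = - ln (bn k0)"
proof -
  have "H.aa N = (\<Sum>j\<le>N. if j = k0 then real (N choose k0) * kl (1 / real (N choose k0)) (H.bin N k0) else 0)"
    unfolding H.aa_def
  proof (rule sum.cong[OF refl])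
    fix j assume j: "j \<in> {..N}"
    show "real (N choose j) * kl (H.hyp N j) (H.bin N j) = (if j = k0 then real (N choose k0) * kl (1 / real (N choose k0)) (H.bin N k0) else 0)"
    proof (cases "j = k0")
      case True then show ?thesis by (simp add: H.hyp_def)
    next
      case False
      hence "H.hyp N j = 0" by (simp add: H.hyp_def)
      then show ?thesis using False by (simp add: kl_def)
    qed
  qed
  also have "\<dots> = real (N choose k0) * kl (1 / real (N choose k0)) (H.bin N k0)"
    using k0N' by (simp add: sum.delta)
  also have "\<dots> = - ln (bn k0)"
  proof -
    have c: "real (N choose k0) > 0" using k0N' by simp
    have b: "H.bin N k0 > 0" by (rule H.bin_pos)
    have "real (N choose k0) * kl (1 / real (N choose k0)) (H.bin N k0) = ln (1 / real (N choose k0) / H.bin N k0)"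
      using c by (simp add: kl_def)
    also have "1 / real (N choose k0) / H.bin N k0 = 1 / bn k0"
      by (simp add: bn_def H.bin_def)
    also have "ln (1 / bn k0) = - ln (bn k0)" using bn_k0_pos by (simp add: ln_div)
    finally show ?thesis .
  qed
  finally show ?thesis .
qed

lemma binom_step: "k < N \<Longrightarrow> (N choose Suc k) * Suc k = (N choose k) * (N - k)"
proof -
  assume "k < N"
  have "Suc k * (N choose Suc k) = N * ((N - 1) choose k)"
    using times_binomial_minus1_eq[of "Suc k" N] by simp
  moreover have "(N - k) * (N choose k) = N * ((N - 1) choose k)" by (rule binomial_absorb_comp)
  ultimately show ?thesis by (simp add: mult.commute)
qed

lemma bn_ratio:
  assumes "k < N"
  shows "bn (Suc k) * (real (Suc k) * (1 - pp)) = bn k * (real (N - k) * pp)"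
proof -
  have e: "real (N choose Suc k) * real (Suc k) = real (N choose k) * real (N - k)"
    using arg_cong[OF binom_step[OF assms], of real] by (simp only: of_nat_mult)
  have nk: "N - k = Suc (N - Suc k)" using assms by simp
  have "bn (Suc k) * (real (Suc k) * (1 - pp)) = (real (N choose Suc k) * real (Suc k)) * pp ^ Suc k * (1 - pp) ^ Suc (N - Suc k)"
    by (simp add: bn_def algebra_simps)
  also have "\<dots> = (real (N choose k) * real (N - k)) * pp ^ Suc k * (1 - pp) ^ (N - k)"
    unfolding e nk by simp
  also have "\<dots> = bn k * (real (N - k) * pp)"
    by (simp add: bn_def algebra_simps)
  finally show ?thesis .
qed

lemma bn_up: assumes "k < k0" shows "bn k \<le> bn (Suc k)"
proof -
  define K where "K = real k0"
  define n where "n = real N"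
  define x where "x = real k"
  have n0: "n > 0" using k0N' by (simp add: n_def)
  have kN: "k < N" using assms k0N' by simp
  have xK: "x + 1 \<le> K" using assms by (simp add: x_def K_def)
  have Kn: "K \<le> n" using k0N' by (simp add: K_def n_def)
  have "(n - x) * K - (x + 1) * (n - K) = n * (K - x - 1) + K" by (simp add: algebra_simps)
  moreover have "n * (K - x - 1) + K \<ge> 0" using xK n0 Kn by (simp add: K_def)
  ultimately have "(x + 1) * (n - K) \<le> (n - x) * K" by simp
  hence "(x + 1) * (n - K) / n \<le> (n - x) * K / n" using n0 by (simp add: divide_right_mono)
  moreover have "real (Suc k) * (1 - pp) = (x + 1) * (n - K) / n"
  proof -
    have "(n - K) / n = 1 - pp" using n0 by (simp add: pp_def K_def n_def diff_divide_distrib)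
    moreover have "real (Suc k) = x + 1" by (simp add: x_def)
    ultimately show ?thesis by (metis times_divide_eq_right)
  qed
  moreover have "real (N - k) * pp = (n - x) * K / n"
    using kN by (simp add: pp_def x_def K_def n_def of_nat_diff)
  ultimately have XY: "real (Suc k) * (1 - pp) \<le> real (N - k) * pp" by simp
  have X0: "real (Suc k) * (1 - pp) > 0" using pp1 by simp
  have "bn (Suc k) * (real (Suc k) * (1 - pp)) \<ge> bn k * (real (Suc k) * (1 - pp))"
    unfolding bn_ratio[OF kN] using XY bn_nonneg by (intro mult_left_mono) auto
  then show ?thesis using X0 by (rule mult_right_le_imp_le)
qed

lemma bn_down: assumes "k0 \<le> k" "k < N" shows "bn (Suc k) \<le> bn k"
proof -
  define K where "K = real k0"
  define n where "n = real N"
  define x where "x = real k"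
  have n0: "n > 0" using k0N' by (simp add: n_def)
  have xK: "K \<le> x" using assms by (simp add: x_def K_def)
  have Kn: "x \<le> n" using assms by (simp add: x_def n_def)
  have "(n - x) * K - (x + 1) * (n - K) = n * (K - x - 1) + K" by (simp add: algebra_simps)
  moreover have "n * (K - x - 1) + K \<le> 0"
  proof -
    have "n * (K - x - 1) \<le> n * (-1)" using xK n0 by (intro mult_left_mono) auto
    then show ?thesis using Kn xK by simp
  qed
  ultimately have "(n - x) * K \<le> (x + 1) * (n - K)" by simp
  hence "(n - x) * K / n \<le> (x + 1) * (n - K) / n" using n0 by (simp add: divide_right_mono)
  moreover have "real (Suc k) * (1 - pp) = (x + 1) * (n - K) / n"
  proof -
    have "(n - K) / n = 1 - pp" using n0 by (simp add: pp_def K_def n_def diff_divide_distrib)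
    moreover have "real (Suc k) = x + 1" by (simp add: x_def)
    ultimately show ?thesis by (metis times_divide_eq_right)
  qed
  moreover have "real (N - k) * pp = (n - x) * K / n"
    using assms by (simp add: pp_def x_def K_def n_def of_nat_diff)
  ultimately have XY: "real (N - k) * pp \<le> real (Suc k) * (1 - pp)" by simp
  have X0: "real (Suc k) * (1 - pp) > 0" using pp1 by simp
  have "bn (Suc k) * (real (Suc k) * (1 - pp)) \<le> bn k * (real (Suc k) * (1 - pp))"
    unfolding bn_ratio[OF assms(2)] using XY bn_nonneg by (intro mult_left_mono) auto
  then show ?thesis using X0 by (rule mult_right_le_imp_le)
qed

lemma mode: assumes "k \<le> N" shows "bn k \<le> bn k0"
proof (cases "k \<le> k0")
  case True
  have "\<forall>i. i \<le> k0 \<longrightarrow> bn (k0 - i) \<le> bn k0"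
  proof
    fix i show "i \<le> k0 \<longrightarrow> bn (k0 - i) \<le> bn k0"
    proof (induction i)
      case 0 then show ?case by simp
    next
      case (Suc i)
      show ?case
      proof
        assume "Suc i \<le> k0"
        hence "bn (k0 - Suc i) \<le> bn (Suc (k0 - Suc i))" by (intro bn_up) auto
        moreover have "Suc (k0 - Suc i) = k0 - i" using \<open>Suc i \<le> k0\<close> by simp
        ultimately show "bn (k0 - Suc i) \<le> bn k0" using Suc \<open>Suc i \<le> k0\<close> by simp
      qed
    qed
  qed
  hence "bn (k0 - (k0 - k)) \<le> bn k0" by simp
  moreover have "k0 - (k0 - k) = k" using True by simp
  ultimately show ?thesis by simp
next
  case False
  have "\<forall>i. k0 + i \<le> N \<longrightarrow> bn (k0 + i) \<le> bn k0"
  proof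
    fix i show "k0 + i \<le> N \<longrightarrow> bn (k0 + i) \<le> bn k0"
    proof (induction i)
      case 0 then show ?case by simp
    next
      case (Suc i)
      show ?case
      proof
        assume a: "k0 + Suc i \<le> N"
        hence "bn (Suc (k0 + i)) \<le> bn (k0 + i)" by (intro bn_down) auto
        then show "bn (k0 + Suc i) \<le> bn k0" using Suc a by simp
      qed
    qed
  qed
  hence "k0 + (k - k0) \<le> N \<longrightarrow> bn (k0 + (k - k0)) \<le> bn k0" by (rule spec)
  hence "bn (k0 + (k - k0)) \<le> bn k0" using False assms by simp
  moreover have "k0 + (k - k0) = k" using False by simp
  ultimately show ?thesis by simp
qed

lemma bn_k0_lower: "bn k0 \<ge> 1 / (real N + 1)"
proof -
  have "1 = (\<Sum>k\<le>N. bn k)" using bn_sum by simp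
  also have "\<dots> \<le> (\<Sum>k\<le>N. bn k0)" by (intro sum_mono mode) auto
  also have "\<dots> = (real N + 1) * bn k0" by simp
  finally show ?thesis by (simp add: field_simps)
qed

lemma aN_upper: "H.aa N \<le> ln (real N + 1)"
proof -
  have "ln (1 / (real N + 1)) \<le> ln (bn k0)" using bn_k0_lower by (intro ln_mono) auto
  then show ?thesis unfolding aN by (simp add: ln_div)
qed

definition AA :: real where "AA = real k0 * real (N - k0) / real N"

lemma AA_pos: "AA > 0" using k0p k0N' by (simp add: AA_def)

lemma win_step:
  assumes i: "i < L" and kL: "k0 + L \<le> N"
  shows "bn (Suc (k0 + i)) \<ge> (1 - real L / AA) * bn (k0 + i)"
proof -
  define K where "K = real k0"
  define M where "M = real (N - k0)"
  define n where "n = real N"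
  define z where "z = real i"
  have K0: "K > 0" using k0p by (simp add: K_def)
  have M0: "M > 0" using k0N' by (simp add: M_def)
  have nKM: "n = K + M" using k0N' by (simp add: n_def K_def M_def of_nat_diff)
  have n0: "n > 0" using K0 M0 nKM by simp
  have kN: "k0 + i < N" using i kL by simp
  have A: "AA = K * M / n" by (simp add: AA_def K_def M_def n_def)
  have X: "real (Suc (k0 + i)) * (1 - pp) = (K + z + 1) * M / n"
  proof -
    have "1 - pp = M / n" using n0 nKM by (simp add: pp_def K_def n_def field_simps)
    moreover have "real (Suc (k0 + i)) = K + z + 1" by (simp add: K_def z_def)
    ultimately show ?thesis by simp
  qed
  have Y: "real (N - (k0 + i)) * pp = (M - z) * K / n"
  proof -
    have "real (N - (k0 + i)) = M - z" using kN by (simp add: M_def z_def of_nat_diff)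
    then show ?thesis by (simp add: pp_def K_def n_def)
  qed
  define E where "E = (M - z) * K^2 - (K + z + 1) * M * K + real L * n * (K + z + 1)"
  have E_id: "E = (real L - z - 1) * n * (K + z + 1) + K^2 + n * (z + 1)^2"
    unfolding E_def nKM by (simp add: algebra_simps power2_eq_square)
  have "real L - z - 1 \<ge> 0" using i by (simp add: z_def)
  moreover have "K + z + 1 \<ge> 0" using K0 by (simp add: z_def)
  ultimately have E0: "E \<ge> 0" unfolding E_id using n0 K0 by (intro add_nonneg_nonneg mult_nonneg_nonneg) (auto simp: z_def)
  have YX: "(M - z) * K / n - (1 - real L / AA) * ((K + z + 1) * M / n) = E / (n * K)"
    unfolding A E_def using n0 K0 M0 by (simp add: field_simps power2_eq_square)
  have XYi: "(1 - real L / AA) * (real (Suc (k0 + i)) * (1 - pp)) \<le> real (N - (k0 + i)) * pp"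
    unfolding X Y using YX E0 n0 K0 by (smt (verit) divide_nonneg_pos mult_pos_pos)
  have X0: "real (Suc (k0 + i)) * (1 - pp) > 0" using pp1 by simp
  have "bn (Suc (k0 + i)) * (real (Suc (k0 + i)) * (1 - pp)) = bn (k0 + i) * (real (N - (k0 + i)) * pp)"
    by (rule bn_ratio[OF kN])
  also have "\<dots> \<ge> bn (k0 + i) * ((1 - real L / AA) * (real (Suc (k0 + i)) * (1 - pp)))"
    using XYi bn_nonneg by (intro mult_left_mono) auto
  finally have F: "bn (k0 + i) * ((1 - real L / AA) * (real (Suc (k0 + i)) * (1 - pp))) \<le> bn (Suc (k0 + i)) * (real (Suc (k0 + i)) * (1 - pp))" .
  have "bn (k0 + i) * ((1 - real L / AA) * (real (Suc (k0 + i)) * (1 - pp))) = ((1 - real L / AA) * bn (k0 + i)) * (real (Suc (k0 + i)) * (1 - pp))"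
    by (metis mult.assoc mult.commute)
  with F have "((1 - real L / AA) * bn (k0 + i)) * (real (Suc (k0 + i)) * (1 - pp)) \<le> bn (Suc (k0 + i)) * (real (Suc (k0 + i)) * (1 - pp))"
    by (simp only:)
  then show ?thesis using X0 by (rule mult_right_le_imp_le)
qed

lemma window:
  assumes kL: "k0 + L \<le> N" and L2: "real L ^ 2 \<le> AA / 2"
  shows "real (Suc L) * bn k0 \<le> 2"
proof -
  define c where "c = 1 - real L / AA"
  have LL: "real L \<le> real L ^ 2" by (cases L) (auto simp: power2_eq_square)
  have LA: "real L \<le> AA" using LL L2 AA_pos by linarith
  have c0: "0 \<le> c" and c1: "c \<le> 1" using LA AA_pos by (auto simp: c_def field_simps)
  have ind: "i \<le> L \<Longrightarrow> bn (k0 + i) \<ge> c ^ i * bn k0" for i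
  proof (induction i)
    case 0 then show ?case by simp
  next
    case (Suc i)
    have "bn (Suc (k0 + i)) \<ge> c * bn (k0 + i)" unfolding c_def using Suc kL by (intro win_step) auto
    moreover have "c * bn (k0 + i) \<ge> c * (c ^ i * bn k0)" using Suc c0 by (intro mult_left_mono) auto
    ultimately show ?case by simp
  qed
  have half: "c ^ L \<ge> 1 / 2"
  proof -
    have "1 + real L * (- (real L / AA)) \<le> (1 + (- (real L / AA))) ^ L"
      using LA AA_pos by (intro Bernoulli_inequality) (simp add: field_simps)
    moreover have "real L * (real L / AA) \<le> 1 / 2" using L2 AA_pos by (simp add: power2_eq_square field_simps)
    ultimately show ?thesis by (simp add: c_def)
  qed
  have lower: "bn (k0 + i) \<ge> bn k0 / 2" if "i \<le> L" for i
  proof -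
    have "c ^ L \<le> c ^ i" using that c0 c1 by (rule power_decreasing)
    hence "c ^ i \<ge> 1 / 2" using half by simp
    hence "c ^ i * bn k0 \<ge> 1 / 2 * bn k0" using bn_nonneg by (intro mult_right_mono) auto
    then show ?thesis using ind[OF that] by simp
  qed
  have "real (Suc L) * (bn k0 / 2) = (\<Sum>i\<le>L. bn k0 / 2)" by simp
  also have "\<dots> \<le> (\<Sum>i\<le>L. bn (k0 + i))" by (intro sum_mono lower) auto
  also have "\<dots> = (\<Sum>k\<in>(\<lambda>i. k0 + i) ` {..L}. bn k)" by (subst sum.reindex) (auto simp: inj_on_def)
  also have "\<dots> \<le> (\<Sum>k\<le>N. bn k)" using kL by (intro sum_mono2) (auto simp: bn_nonneg)
  also have "\<dots> = 1" by (rule bn_sum)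
  finally show ?thesis by simp
qed

end

lemma maxabs_ge: "finite I \<Longrightarrow> \<psi> \<in> spins I \<Longrightarrow> \<bar>f \<psi>\<bar> \<le> maxabs I f"
  unfolding maxabs_def by (rule Max_ge) (auto simp: finite_spins)

lemma maxabs_nonneg: "finite I \<Longrightarrow> 0 \<le> maxabs I f"
  using maxabs_ge[of I "spin_of I {}" f] spin_of_in[of I "{}"] by linarith

lemma np_le: "finite I \<Longrightarrow> np I \<psi> \<le> card I"
  unfolding np_def by (rule card_mono) auto

context modl
begin

definition FMC :: "nat \<Rightarrow> real" where
  "FMC k = (if k = k0 then 1 / real (N choose k0) else 0)"

lemma hypN: "H.hyp N k = FMC k"
  by (simp add: H.hyp_def FMC_def)

lemma marg_MC: assumes "j \<le> n" "n \<le> N"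
  shows "(\<Sum>k\<le>N - n. real (N - n choose k) * FMC (j + k)) = H.hyp n j"
proof (cases "j \<le> k0")
  case True
  have "(\<Sum>k\<le>N - n. real (N - n choose k) * FMC (j + k))
      = (\<Sum>k\<le>N - n. if k = k0 - j then real (N - n choose (k0 - j)) / real (N choose k0) else 0)"
    using True by (intro sum.cong refl) (auto simp: FMC_def)
  also have "\<dots> = (if k0 - j \<le> N - n then real (N - n choose (k0 - j)) / real (N choose k0) else 0)"
    by (simp add: sum.delta)
  also have "\<dots> = H.hyp n j" using True by (auto simp: H.hyp_def binomial_eq_0)
  finally show ?thesis .
next
  case False
  then show ?thesis by (auto simp: FMC_def H.hyp_def intro!: sum.neutral)
qed

lemma marg_C: assumes "j \<le> n" "n \<le> N"
  shows "(\<Sum>k\<le>N - n. real (N - n choose k) * H.bin N (j + k)) = H.bin n j"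
proof -
  have "(\<Sum>k\<le>N - n. real (N - n choose k) * H.bin N (j + k))
      = (\<Sum>k\<le>N - n. H.bin n j * (real (N - n choose k) * pp ^ k * (1 - pp) ^ (N - n - k)))"
  proof (intro sum.cong refl)
    fix k assume k: "k \<in> {..N - n}"
    have "N - (j + k) = (n - j) + (N - n - k)" using k assms by auto
    then show "real (N - n choose k) * H.bin N (j + k) = H.bin n j * (real (N - n choose k) * pp ^ k * (1 - pp) ^ (N - n - k))"
      by (simp add: H.bin_def power_add algebra_simps)
  qed
  also have "\<dots> = H.bin n j * (\<Sum>k\<le>N - n. real (N - n choose k) * pp ^ k * (1 - pp) ^ (N - n - k))"
    by (simp only: sum_distrib_left)
  also have "(\<Sum>k\<le>N - n. real (N - n choose k) * pp ^ k * (1 - pp) ^ (N - n - k)) = (pp + (1 - pp)) ^ (N - n)"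
    by (rule binomial_ring[symmetric])
  finally show ?thesis by simp
qed


lemma sumX: assumes fin: "finite Lam" and cN: "card Lam = N"
    and X: "\<And>\<phi>. \<phi> \<in> spins Lam \<Longrightarrow> X \<phi> = FMC (np Lam \<phi>)"
  shows "(\<Sum>\<phi>\<in>spins Lam. X \<phi>) = 1"
proof -
  have "(\<Sum>\<phi>\<in>spins Lam. X \<phi>) = (\<Sum>\<phi>\<in>spins Lam. FMC (np Lam \<phi>))" using X by simp
  also have "\<dots> = (\<Sum>k\<le>N. real (N choose k) * FMC k)" using sum_spins_np[OF fin] cN by simp
  also have "\<dots> = (\<Sum>k\<le>N. if k = k0 then 1 else 0)"
    using k0N' by (intro sum.cong refl) (simp add: FMC_def)
  also have "\<dots> = 1" using k0N' by simp
  finally show ?thesis .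
qed

lemma relent: assumes fin: "finite Lam" and cN: "card Lam = N"
    and X: "\<And>\<phi>. \<phi> \<in> spins Lam \<Longrightarrow> X \<phi> = FMC (np Lam \<phi>)"
    and Y: "\<And>\<phi>. \<phi> \<in> spins Lam \<Longrightarrow> Y \<phi> = H.bin N (np Lam \<phi>)"
  shows "rel_entropy Lam X Y = H.aa N"
proof -
  have "rel_entropy Lam X Y = (\<Sum>\<phi>\<in>spins Lam. kl (FMC (np Lam \<phi>)) (H.bin N (np Lam \<phi>)))"
    unfolding rel_entropy_def using X Y by (intro sum.cong refl) (simp add: kl_def)
  also have "\<dots> = (\<Sum>k\<le>N. real (N choose k) * kl (FMC k) (H.bin N k))"
    using sum_spins_np[OF fin, of "\<lambda>k. kl (FMC k) (H.bin N k)"] cN by simp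
  also have "\<dots> = H.aa N" unfolding H.aa_def hypN ..
  finally show ?thesis .
qed

lemma core:
  fixes Lam I :: "'a set"
  assumes fin: "finite Lam" and cN: "card Lam = N" and IS: "I \<subseteq> Lam"
    and X: "\<And>\<phi>. \<phi> \<in> spins Lam \<Longrightarrow> X \<phi> = FMC (np Lam \<phi>)"
    and Y: "\<And>\<phi>. \<phi> \<in> spins Lam \<Longrightarrow> Y \<phi> = H.bin N (np Lam \<phi>)"
  shows "\<bar>expect Lam X (f \<circ> proj I) - expect Lam Y (f \<circ> proj I)\<bar>
           \<le> sqrt (2 * real (card I)) * maxabs I f * sqrt (H.aa N / real N)"
proof -
  define n where "n = card I"
  have fI: "finite I" using fin IS finite_subset by blast
  have nN: "n \<le> N" unfolding n_def cN[symmetric] using fin IS by (rule card_mono)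
  have npI: "np I \<psi> \<le> n" for \<psi> unfolding n_def using fI by (rule np_le)
  have eX: "expect Lam X (g \<circ> proj I) = (\<Sum>\<psi>\<in>spins I. g \<psi> * H.hyp n (np I \<psi>))" for g
    using expect_marg[where F=FMC and g=g, OF fin IS X] marg_MC[OF npI nN] by (simp add: cN n_def)
  have eY: "expect Lam Y (g \<circ> proj I) = (\<Sum>\<psi>\<in>spins I. g \<psi> * H.bin n (np I \<psi>))" for g
    using expect_marg[where F="H.bin N" and g=g, OF fin IS Y] marg_C[OF npI nN] by (simp add: cN n_def)
  define M where "M = maxabs I f"
  have M0: "M \<ge> 0" unfolding M_def using fI by (rule maxabs_nonneg)
  define u where "u j = real (n choose j) * H.hyp n j" for j
  define v where "v j = real (n choose j) * H.bin n j" for j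
  have "\<bar>expect Lam X (f \<circ> proj I) - expect Lam Y (f \<circ> proj I)\<bar>
       = \<bar>\<Sum>\<psi>\<in>spins I. f \<psi> * (H.hyp n (np I \<psi>) - H.bin n (np I \<psi>))\<bar>"
    unfolding eX eY by (simp add: sum_subtractf[symmetric] algebra_simps)
  also have "\<dots> \<le> (\<Sum>\<psi>\<in>spins I. \<bar>f \<psi> * (H.hyp n (np I \<psi>) - H.bin n (np I \<psi>))\<bar>)"
    by (rule sum_abs)
  also have "\<dots> \<le> (\<Sum>\<psi>\<in>spins I. M * \<bar>H.hyp n (np I \<psi>) - H.bin n (np I \<psi>)\<bar>)"
    unfolding abs_mult M_def using maxabs_ge[OF fI]
    by (intro sum_mono mult_right_mono) auto
  also have "\<dots> = M * (\<Sum>j\<le>n. real (n choose j) * \<bar>H.hyp n j - H.bin n j\<bar>)"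
    unfolding sum_distrib_left[symmetric] using sum_spins_np[OF fI, of "\<lambda>j. \<bar>H.hyp n j - H.bin n j\<bar>"]
    by (simp add: n_def)
  also have "(\<Sum>j\<le>n. real (n choose j) * \<bar>H.hyp n j - H.bin n j\<bar>) = (\<Sum>j\<le>n. \<bar>u j - v j\<bar>)"
    unfolding u_def v_def by (intro sum.cong refl) (simp add: abs_mult right_diff_distrib[symmetric])
  finally have D: "\<bar>expect Lam X (f \<circ> proj I) - expect Lam Y (f \<circ> proj I)\<bar> \<le> M * (\<Sum>j\<le>n. \<bar>u j - v j\<bar>)" .
  have su: "sum u {..n} = 1"
  proof -
    have "sum u {..n} = (\<Sum>\<psi>\<in>spins I. 1 * H.hyp n (np I \<psi>))"
      unfolding u_def using sum_spins_np[OF fI, of "H.hyp n"] by (simp add: n_def)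
    also have "\<dots> = expect Lam X ((\<lambda>_. 1) \<circ> proj I)" unfolding eX ..
    also have "\<dots> = (\<Sum>\<phi>\<in>spins Lam. X \<phi>)" by (simp add: expect_def)
    also have "\<dots> = 1" by (rule sumX[OF fin cN X])
    finally show ?thesis .
  qed
  have sv: "sum v {..n} = 1"
    unfolding v_def H.bin_def using binomial_ring[of pp "1 - pp" n] by (simp add: algebra_simps)
  have upos: "u j \<ge> 0" for j unfolding u_def using H.hyp_nonneg by simp
  have vpos: "j \<in> {..n} \<Longrightarrow> v j > 0" for j unfolding v_def using H.bin_pos by simp
  have klsum: "(\<Sum>j\<le>n. kl (u j) (v j)) = H.aa n"
    unfolding H.aa_def u_def v_def using H.bin_pos
    by (intro sum.cong refl) (simp add: kl_scale)
  have P: "(\<Sum>j\<le>n. \<bar>u j - v j\<bar>)^2 \<le> 2 * H.aa n"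
    using pinsker[of "{..n}" u v] upos vpos su sv klsum by simp
  have Hn: "H.aa n \<le> real n * H.aa N / real N"
    using H.han[OF nN] k0N' by (simp add: field_simps)
  have S0: "0 \<le> (\<Sum>j\<le>n. \<bar>u j - v j\<bar>)" by (simp add: sum_nonneg)
  have "(\<Sum>j\<le>n. \<bar>u j - v j\<bar>) = sqrt ((\<Sum>j\<le>n. \<bar>u j - v j\<bar>)^2)" using S0 by simp
  also have "\<dots> \<le> sqrt (2 * (real n * H.aa N / real N))"
    using P Hn by (intro real_sqrt_le_mono) linarith
  also have "\<dots> = sqrt (2 * real n) * sqrt (H.aa N / real N)"
    by (simp add: real_sqrt_mult[symmetric])
  finally have "(\<Sum>j\<le>n. \<bar>u j - v j\<bar>) \<le> sqrt (2 * real n) * sqrt (H.aa N / real N)" .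
  hence "M * (\<Sum>j\<le>n. \<bar>u j - v j\<bar>) \<le> M * (sqrt (2 * real n) * sqrt (H.aa N / real N))"
    using M0 by (rule mult_left_mono)
  with D show ?thesis by (simp add: n_def M_def algebra_simps)
qed

end

lemma magn_np:
  assumes fin: "finite Lam" and phi: "\<phi> \<in> spins Lam"
  shows "magn Lam \<phi> = 2 * real (np Lam \<phi>) - real (card Lam)"
proof -
  have "magn Lam \<phi> = (\<Sum>x\<in>Lam. 2 * (if \<phi> x = 1 then 1 else 0) - 1)"
    unfolding magn_def using spins_val[OF phi] by (intro sum.cong refl) force
  also have "\<dots> = 2 * (\<Sum>x\<in>Lam. if \<phi> x = 1 then 1 else 0) - real (card Lam)"
    by (simp add: sum_subtractf sum_distrib_left)
  also have "(\<Sum>x\<in>Lam. if \<phi> x = 1 then 1 else (0::real)) = real (np Lam \<phi>)"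
    unfolding np_def using fin by (simp add: sum.inter_filter[symmetric])
  finally show ?thesis .
qed

lemma magN_np:
  assumes fin: "finite Lam" and phi: "\<phi> \<in> spins Lam"
  shows "magN Lam \<phi> = (2 * real (np Lam \<phi>) - real (card Lam)) / real (card Lam)"
  using magn_np[OF assms] by (simp add: magN_def)

context modl
begin

lemma link_MC:
  assumes fin: "finite Lam" and cN: "card Lam = N" and m: "m = 2 * pp - 1" and phi: "\<phi> \<in> spins Lam"
  shows "mu_MC Lam m \<phi> = FMC (np Lam \<phi>)"
proof -
  have N0: "real N > 0" using k0N' by simp
  have mm: "m = (2 * real k0 - real N) / real N" using m N0 by (simp add: pp_def field_simps)
  have iff: "magN Lam \<psi> = m \<longleftrightarrow> np Lam \<psi> = k0" if "\<psi> \<in> spins Lam" for \<psi>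
  proof -
    have "magN Lam \<psi> = m \<longleftrightarrow> (2 * real (np Lam \<psi>) - real N) / real N = (2 * real k0 - real N) / real N"
      unfolding magN_np[OF fin that] cN mm ..
    also have "\<dots> \<longleftrightarrow> 2 * real (np Lam \<psi>) - real N = 2 * real k0 - real N" using N0 by simp
    also have "\<dots> \<longleftrightarrow> np Lam \<psi> = k0" by simp
    finally show ?thesis .
  qed
  have mc: "mc_set Lam m = {\<psi>\<in>spins Lam. np Lam \<psi> = k0}"
    unfolding mc_set_def using iff by auto
  have "real (card (mc_set Lam m)) = (\<Sum>\<psi>\<in>spins Lam. if np Lam \<psi> = k0 then 1 else 0)"
    unfolding mc using fin by (simp add: sum.inter_filter[symmetric] finite_spins)
  also have "\<dots> = (\<Sum>k\<le>N. real (N choose k) * (if k = k0 then 1 else 0))"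
    using sum_spins_np[OF fin, of "\<lambda>k. if k = k0 then 1 else 0"] cN by simp
  also have "\<dots> = (\<Sum>k\<le>N. if k = k0 then real (N choose k) else 0)" by (intro sum.cong) auto
  also have "\<dots> = real (N choose k0)" using k0N' by (simp add: sum.delta)
  finally have card: "real (card (mc_set Lam m)) = real (N choose k0)" .
  show ?thesis unfolding mu_MC_def FMC_def card using mc phi by auto
qed

lemma link_C:
  assumes fin: "finite Lam" and cN: "card Lam = N" and m: "m = 2 * pp - 1" and phi: "\<phi> \<in> spins Lam"
  shows "mu_C Lam (artanh (- m)) \<phi> = H.bin N (np Lam \<phi>)"
proof -
  define \<mu> where "\<mu> = artanh (- m)"
  have q0: "1 - pp > 0" and p0: "pp > 0" using pp0 pp1 by auto
  have mu: "\<mu> = ln ((1 - pp) / pp) / 2"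
  proof -
    have a: "1 + - m = 2 * (1 - pp)" and b: "1 - - m = 2 * pp" by (simp_all add: m)
    have "(1 + - m) / (1 - - m) = (1 - pp) / pp" unfolding a b by (rule mult_divide_mult_cancel_left) simp
    then show ?thesis by (simp add: \<mu>_def artanh_def)
  qed
  define w where "w = pp / (1 - pp)"
  define c where "c = exp \<mu> ^ N"
  have w0: "w > 0" using p0 q0 by (simp add: w_def)
  have c0: "c > 0" by (simp add: c_def)
  have e2: "exp (- 2 * \<mu>) = w"
  proof -
    have "exp (- 2 * \<mu>) = exp (- ln ((1 - pp) / pp))" by (simp add: mu)
    also have "\<dots> = 1 / ((1 - pp) / pp)" using p0 q0 by (simp add: exp_minus inverse_eq_divide)
    finally show ?thesis by (simp add: w_def)
  qed
  have ex: "exp (- \<mu> * magn Lam \<psi>) = w ^ np Lam \<psi> * c" if "\<psi> \<in> spins Lam" for \<psi>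
  proof -
    have "- \<mu> * magn Lam \<psi> = real (np Lam \<psi>) * (- 2 * \<mu>) + real N * \<mu>"
      unfolding magn_np[OF fin that] cN by (simp add: algebra_simps)
    then have "exp (- \<mu> * magn Lam \<psi>) = exp (real (np Lam \<psi>) * (- 2 * \<mu>) + real N * \<mu>)"
      by simp
    also have "\<dots> = exp (real (np Lam \<psi>) * (- 2 * \<mu>)) * exp (real N * \<mu>)"
      by (rule exp_add)
    also have "\<dots> = exp (- 2 * \<mu>) ^ np Lam \<psi> * exp \<mu> ^ N" by (simp only: exp_of_nat_mult)
    finally show ?thesis by (simp only: e2 c_def)
  qed
  have Z: "Zc Lam \<mu> = c * (w + 1) ^ N"
  proof -
    have "Zc Lam \<mu> = (\<Sum>\<psi>\<in>spins Lam. w ^ np Lam \<psi> * c)" unfolding Zc_def using ex by simp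
    also have "\<dots> = (\<Sum>k\<le>N. real (N choose k) * (w ^ k * c))"
      using sum_spins_np[OF fin, of "\<lambda>k. w ^ k * c"] cN by simp
    also have "\<dots> = c * (\<Sum>k\<le>N. real (N choose k) * w ^ k * 1 ^ (N - k))"
      by (simp add: sum_distrib_left algebra_simps)
    also have "(\<Sum>k\<le>N. real (N choose k) * w ^ k * 1 ^ (N - k)) = (w + 1) ^ N"
      by (rule binomial_ring[symmetric])
    finally show ?thesis .
  qed
  have w1: "w + 1 = 1 / (1 - pp)" using q0 by (simp add: w_def field_simps)
  define k where "k = np Lam \<phi>"
  have kN: "k \<le> N" unfolding k_def cN[symmetric] using fin by (rule np_le)
  have "mu_C Lam \<mu> \<phi> = w ^ k * c / (c * (w + 1) ^ N)" unfolding mu_C_def Z ex[OF phi] k_def ..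
  also have "\<dots> = w ^ k * (1 - pp) ^ N" using c0 q0 unfolding w1 by (simp add: power_divide)
  also have "(1 - pp) ^ N = (1 - pp) ^ k * (1 - pp) ^ (N - k)" using kN by (simp add: power_add[symmetric])
  also have "w ^ k * ((1 - pp) ^ k * (1 - pp) ^ (N - k)) = (w * (1 - pp)) ^ k * (1 - pp) ^ (N - k)"
    by (simp add: power_mult_distrib)
  also have "w * (1 - pp) = pp" using q0 by (simp add: w_def)
  finally show ?thesis by (simp add: \<mu>_def H.bin_def k_def)
qed

end

lemma setup_k0:
  assumes fin: "finite Lam" and ne: "Lam \<noteq> {}" and mR: "m \<in> RanM Lam" and m1: "m \<noteq> 1" and m2: "m \<noteq> -1"
  shows "\<exists>k0. modl (card Lam) k0 \<and> m = 2 * modl.pp (card Lam) k0 - 1"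
proof -
  obtain \<phi>0 where phi: "\<phi>0 \<in> spins Lam" and mm: "magN Lam \<phi>0 = m" using mR by (auto simp: RanM_def)
  define N where "N = card Lam"
  define k0 where "k0 = np Lam \<phi>0"
  have N0: "real N > 0" using fin ne by (simp add: N_def card_gt_0_iff)
  have kN: "k0 \<le> N" unfolding k0_def N_def using fin by (rule np_le)
  have m': "m = (2 * real k0 - real N) / real N" using magN_np[OF fin phi] mm by (simp add: k0_def N_def)
  have "k0 \<noteq> 0"
  proof
    assume "k0 = 0" then have "m = -1" using m' N0 by simp
    with m2 show False by simp
  qed
  moreover have "k0 \<noteq> N"
  proof
    assume "k0 = N" then have "m = 1" using m' N0 by simp
    with m1 show False by simp
  qed
  ultimately have mod: "modl N k0" using kN by unfold_locales auto
  have "m = 2 * modl.pp N k0 - 1" using m' N0 by (simp add: modl.pp_def[OF mod] diff_divide_distrib)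
  then show ?thesis using mod by (auto simp: N_def)
qed

lemma RanM_bound: "finite Lam \<Longrightarrow> m \<in> RanM Lam \<Longrightarrow> \<bar>m\<bar> \<le> 1"
proof -
  assume fin: "finite Lam" and mR: "m \<in> RanM Lam"
  obtain \<phi>0 where phi: "\<phi>0 \<in> spins Lam" and mm: "magN Lam \<phi>0 = m" using mR by (auto simp: RanM_def)
  have kN: "np Lam \<phi>0 \<le> card Lam" using fin by (rule np_le)
  show ?thesis
  proof (cases "card Lam = 0")
    case True then show ?thesis using mm by (simp add: magN_def)
  next
    case False
    hence N0: "real (card Lam) > 0" by simp
    define a where "a = 2 * real (np Lam \<phi>0) - real (card Lam)"
    have "m = a / real (card Lam)" using magN_np[OF fin phi] mm by (simp add: a_def)
    hence "\<bar>m\<bar> = \<bar>a\<bar> / real (card Lam)" using N0 by (simp add: abs_divide)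
    moreover have "\<bar>a\<bar> \<le> real (card Lam)" using kN by (simp add: a_def)
    hence "\<bar>a\<bar> / real (card Lam) \<le> real (card Lam) / real (card Lam)" using N0 by (intro divide_right_mono) auto
    ultimately show ?thesis using N0 by simp
  qed
qed

lemma part1:
  assumes m1: "m \<noteq> 1" and m2: "m \<noteq> -1"
    and fin: "finite Lam" and ne: "Lam \<noteq> {}" and IS: "I \<subseteq> Lam" and mR: "m \<in> RanM Lam"
  shows "\<bar>expect Lam (mu_MC Lam m) (f \<circ> proj I) - expect Lam (mu_C Lam (artanh (- m))) (f \<circ> proj I)\<bar>
            \<le> sqrt (2 * real (card I)) * maxabs I f
               * sqrt (rel_entropy Lam (mu_MC Lam m) (mu_C Lam (artanh (- m))) / real (card Lam))
          \<and> sqrt (2 * real (card I)) * maxabs I f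
               * sqrt (rel_entropy Lam (mu_MC Lam m) (mu_C Lam (artanh (- m))) / real (card Lam))
            \<le> sqrt (2 * real (card I)) * maxabs I f
               * sqrt (ln (real (card Lam) + 1) / real (card Lam))"
proof -
  obtain k0 where mod: "modl (card Lam) k0" and mp: "m = 2 * modl.pp (card Lam) k0 - 1"
    using setup_k0[OF fin ne mR m1 m2] by blast
  interpret Q: modl "card Lam" k0 by (rule mod)
  have X: "\<And>\<phi>. \<phi> \<in> spins Lam \<Longrightarrow> mu_MC Lam m \<phi> = Q.FMC (np Lam \<phi>)"
    using Q.link_MC[OF fin refl mp] by blast
  have Y: "\<And>\<phi>. \<phi> \<in> spins Lam \<Longrightarrow> mu_C Lam (artanh (- m)) \<phi> = Q.H.bin (card Lam) (np Lam \<phi>)"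
    using Q.link_C[OF fin refl mp] by blast
  have R: "rel_entropy Lam (mu_MC Lam m) (mu_C Lam (artanh (- m))) = Q.H.aa (card Lam)"
    by (rule Q.relent[OF fin refl X Y])
  have fI: "finite I" using fin IS finite_subset by blast
  have K0: "0 \<le> sqrt (2 * real (card I)) * maxabs I f" using maxabs_nonneg[OF fI] by simp
  have A: "\<bar>expect Lam (mu_MC Lam m) (f \<circ> proj I) - expect Lam (mu_C Lam (artanh (- m))) (f \<circ> proj I)\<bar>
            \<le> sqrt (2 * real (card I)) * maxabs I f * sqrt (Q.H.aa (card Lam) / real (card Lam))"
    by (rule Q.core[OF fin refl IS X Y])
  have "Q.H.aa (card Lam) / real (card Lam) \<le> ln (real (card Lam) + 1) / real (card Lam)"
    using Q.aN_upper by (intro divide_right_mono) auto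
  hence B: "sqrt (2 * real (card I)) * maxabs I f * sqrt (Q.H.aa (card Lam) / real (card Lam))
     \<le> sqrt (2 * real (card I)) * maxabs I f * sqrt (ln (real (card Lam) + 1) / real (card Lam))"
    using K0 by (intro mult_left_mono) auto
  show ?thesis unfolding R using A B by simp
qed


lemma ln_Suc_le: assumes "N \<ge> 2" shows "ln (real N + 1) \<le> 2 * ln (real N)"
proof -
  have "real N + 1 \<le> real N ^ 2"
  proof -
    have "real N * 2 \<le> real N * real N" using assms by (intro mult_left_mono) auto
    moreover have "real N \<ge> 2" using assms by simp
    ultimately show ?thesis unfolding power2_eq_square by linarith
  qed
  hence "ln (real N + 1) \<le> ln (real N ^ 2)" using assms by (intro ln_mono) auto
  also have "\<dots> = 2 * ln (real N)" using assms by (simp add: ln_realpow)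
  finally show ?thesis .
qed

lemma part2:
  assumes m1: "m \<noteq> 1" and m2: "m \<noteq> -1" and fI: "finite I"
  shows "\<exists>C N0. \<forall>Lam :: 'a set.
             finite Lam \<and> I \<subseteq> Lam \<and> card Lam \<ge> N0 \<and> m \<in> RanM Lam \<longrightarrow>
               \<bar>expect Lam (mu_MC Lam m) (f \<circ> proj I) - expect Lam (mu_C Lam (artanh (- m))) (f \<circ> proj I)\<bar>
                 \<le> C * sqrt (ln (real (card Lam))) / sqrt (real (card Lam))"
proof (intro exI allI impI)
  define K where "K = sqrt (2 * real (card I)) * maxabs I f"
  have K0: "K \<ge> 0" using maxabs_nonneg[OF fI] by (simp add: K_def)
  fix Lam :: "'a set"
  assume h: "finite Lam \<and> I \<subseteq> Lam \<and> card Lam \<ge> 3 \<and> m \<in> RanM Lam"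
  hence fin: "finite Lam" and IS: "I \<subseteq> Lam" and N3: "card Lam \<ge> 3" and mR: "m \<in> RanM Lam" by auto
  define N where "N = card Lam"
  have ne: "Lam \<noteq> {}" using N3 by auto
  have N0: "real N > 0" using N3 by (simp add: N_def)
  have P: "\<bar>expect Lam (mu_MC Lam m) (f \<circ> proj I) - expect Lam (mu_C Lam (artanh (- m))) (f \<circ> proj I)\<bar>
      \<le> K * sqrt (ln (real N + 1) / real N)"
    using part1[OF m1 m2 fin ne IS mR, of f] by (simp add: K_def N_def)
  have "ln (real N + 1) / real N \<le> 2 * ln (real N) / real N"
    using ln_Suc_le[of N] N3 N0 by (intro divide_right_mono) (auto simp: N_def)
  hence "sqrt (ln (real N + 1) / real N) \<le> sqrt (2 * ln (real N) / real N)" by simp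
  also have "\<dots> = sqrt 2 * sqrt (ln (real N)) / sqrt (real N)"
    by (simp add: real_sqrt_mult real_sqrt_divide)
  finally have "K * sqrt (ln (real N + 1) / real N) \<le> K * (sqrt 2 * sqrt (ln (real N)) / sqrt (real N))"
    using K0 by (intro mult_left_mono) auto
  with P show "\<bar>expect Lam (mu_MC Lam m) (f \<circ> proj I) - expect Lam (mu_C Lam (artanh (- m))) (f \<circ> proj I)\<bar>
                 \<le> (K * sqrt 2) * sqrt (ln (real (card Lam))) / sqrt (real (card Lam))"
    by (simp add: N_def algebra_simps)
qed


lemma part3:
  assumes m1: "m \<noteq> 1" and m2: "m \<noteq> -1"
  shows "\<exists>N0 :: nat. \<forall>Lam :: 'a set.
          finite Lam \<and> card Lam \<ge> N0 \<and> m \<in> RanM Lam \<longrightarrow>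
            ln (real (card Lam) + 1) / (4 * real (card Lam))
              \<le> rel_entropy Lam (mu_MC Lam m) (mu_C Lam (artanh (- m))) / real (card Lam)"
proof (cases "\<bar>m\<bar> < 1")
  case False
  show ?thesis
  proof (intro exI allI impI)
    fix Lam :: "'a set"
    assume h: "finite Lam \<and> card Lam \<ge> 0 \<and> m \<in> RanM Lam"
    hence "\<bar>m\<bar> \<le> 1" using RanM_bound by blast
    hence "m = 1 \<or> m = -1" using False by auto
    with m1 m2 show "ln (real (card Lam) + 1) / (4 * real (card Lam))
              \<le> rel_entropy Lam (mu_MC Lam m) (mu_C Lam (artanh (- m))) / real (card Lam)" by auto
  qed
next
  case True
  define p where "p = (1 + m) / 2"
  define c where "c = p * (1 - p)"
  have p0: "0 < p" and p1: "p < 1" using True by (auto simp: p_def)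
  have c0: "c > 0" using p0 p1 by (simp add: c_def)
  define N0 where "N0 = nat \<lceil>128 / c^2\<rceil> + nat \<lceil>p / (2 * (1 - p))\<rceil> + 1"
  show ?thesis
  proof (intro exI allI impI)
    fix Lam :: "'a set"
    assume h: "finite Lam \<and> card Lam \<ge> N0 \<and> m \<in> RanM Lam"
    hence fin: "finite Lam" and NN0: "card Lam \<ge> N0" and mR: "m \<in> RanM Lam" by auto
    define N where "N = card Lam"
    have N1: "N \<ge> 1" using NN0 by (simp add: N0_def N_def)
    have Nr: "real N > 0" using N1 by simp
    have ne: "Lam \<noteq> {}" using N1 by (auto simp: N_def)
    have Nc: "real N \<ge> 128 / c^2"
    proof -
      have "128 / c^2 \<le> real (nat \<lceil>128 / c^2\<rceil>)" by linarith
      moreover have "nat \<lceil>128 / c^2\<rceil> \<le> N" using NN0 unfolding N0_def N_def by linarith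
      ultimately show ?thesis by linarith
    qed
    have Np: "real N \<ge> p / (2 * (1 - p))"
    proof -
      have "p / (2 * (1 - p)) \<le> real (nat \<lceil>p / (2 * (1 - p))\<rceil>)" by linarith
      moreover have "nat \<lceil>p / (2 * (1 - p))\<rceil> \<le> N" using NN0 unfolding N0_def N_def by linarith
      ultimately show ?thesis by linarith
    qed
    obtain k0 where mod: "modl N k0" and mp: "m = 2 * modl.pp N k0 - 1"
      using setup_k0[OF fin ne mR m1 m2] by (auto simp: N_def)
    interpret Q: modl N k0 by (rule mod)
    have ppp: "Q.pp = p" using mp by (simp add: p_def)
    have X: "\<And>\<phi>. \<phi> \<in> spins Lam \<Longrightarrow> mu_MC Lam m \<phi> = Q.FMC (np Lam \<phi>)"
      using Q.link_MC[OF fin N_def[symmetric] mp] by blast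
    have Y: "\<And>\<phi>. \<phi> \<in> spins Lam \<Longrightarrow> mu_C Lam (artanh (- m)) \<phi> = Q.H.bin N (np Lam \<phi>)"
      using Q.link_C[OF fin N_def[symmetric] mp] by blast
    have R: "rel_entropy Lam (mu_MC Lam m) (mu_C Lam (artanh (- m))) = - ln (Q.bn k0)"
      using Q.relent[OF fin N_def[symmetric] X Y] Q.aN by simp
    have k0r: "real k0 = p * real N" using Nr by (simp add: ppp[symmetric] Q.pp_def)
    have Nk0r: "real (N - k0) = (1 - p) * real N" using Q.k0N' k0r by (simp add: of_nat_diff algebra_simps)
    have AA: "Q.AA = real N * c"
      unfolding Q.AA_def k0r Nk0r c_def using Nr by (simp add: power2_eq_square)
    define s where "s = sqrt (Q.AA / 2)"
    have AA0: "Q.AA > 0" by (rule Q.AA_pos)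
    have s0: "s \<ge> 0" using AA0 by (simp add: s_def)
    have s2: "s^2 = Q.AA / 2" using AA0 by (simp add: s_def)
    define L where "L = nat \<lfloor>s\<rfloor>"
    have Ls: "real L \<le> s" using s0 by (simp add: L_def)
    have sL: "s < real L + 1" using s0 by (simp add: L_def)
    have L2: "real L ^ 2 \<le> Q.AA / 2"
      unfolding s2[symmetric] using Ls by (intro power_mono) auto
    have kL: "k0 + L \<le> N"
    proof -
      have "p / 2 \<le> (1 - p) * real N" using Np p1 by (simp add: field_simps)
      hence "real N * (1 - p) * (p / 2) \<le> real N * (1 - p) * ((1 - p) * real N)"
        using Nr p1 by (intro mult_left_mono) auto
      moreover have "Q.AA / 2 = real N * (1 - p) * (p / 2)" unfolding AA c_def by (simp add: field_simps)
      moreover have "((1 - p) * real N)^2 = real N * (1 - p) * ((1 - p) * real N)" by (simp add: power2_eq_square algebra_simps)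
      ultimately have "Q.AA / 2 \<le> ((1 - p) * real N)^2" by linarith
      hence "s \<le> (1 - p) * real N" unfolding s_def using Nr p1
        by (metis abs_of_nonneg less_eq_real_def mult_nonneg_nonneg real_sqrt_abs real_sqrt_le_mono Nr p1 diff_gt_0_iff_gt)
      hence "real L \<le> real (N - k0)" using Ls Nk0r by linarith
      hence "L \<le> N - k0" by simp
      then show ?thesis using Q.k0N' by simp
    qed
    have W: "real (Suc L) * Q.bn k0 \<le> 2" by (rule Q.window[OF kL L2])
    have bpos: "Q.bn k0 > 0" by (rule Q.bn_k0_pos)
    have Lp: "real L + 1 > 0" by simp
    have b2: "Q.bn k0 \<le> 2 / (real L + 1)" using W Lp by (simp add: field_simps)
    have sq: "Q.AA / 2 \<le> (real L + 1)^2"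
      unfolding s2[symmetric] using sL s0 by (intro power_mono) auto
    have big: "real N + 1 \<le> ((real L + 1) / 2) ^ 4"
    proof -
      have "(Q.AA / 2)^2 \<le> ((real L + 1)^2)^2" using sq AA0 by (intro power_mono) auto
      hence "(real N * c / 2)^2 \<le> (real L + 1)^4" unfolding AA by (simp add: power_mult[symmetric])
      moreover have "real N * c^2 \<ge> 128" using Nc c0 by (simp add: field_simps)
      hence "(real N * c / 2)^2 \<ge> 32 * real N"
      proof -
        assume a: "real N * c^2 \<ge> 128"
        have "(real N * c / 2)^2 = real N * (real N * c^2) / 4" by (simp add: power2_eq_square)
        also have "\<dots> \<ge> real N * 128 / 4" using a Nr by (intro divide_right_mono mult_left_mono) auto
        finally show ?thesis by simp
      qed
      moreover have "32 * real N \<ge> 16 * (real N + 1)" using N1 by simp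
      ultimately have "16 * (real N + 1) \<le> (real L + 1)^4" by linarith
      then show ?thesis by (simp add: power_divide)
    qed
    have "ln (real N + 1) \<le> ln (((real L + 1) / 2) ^ 4)" using big Nr by (intro ln_mono) auto
    also have "\<dots> = 4 * ln ((real L + 1) / 2)" using Lp by (simp add: ln_realpow)
    finally have l1: "ln (real N + 1) / 4 \<le> ln ((real L + 1) / 2)" by simp
    have "ln (Q.bn k0) \<le> ln (2 / (real L + 1))" using b2 bpos by (intro ln_mono) auto
    also have "ln (2 / (real L + 1)) = - ln ((real L + 1) / 2)" using Lp by (simp add: ln_div)
    finally have l2: "ln ((real L + 1) / 2) \<le> - ln (Q.bn k0)" by simp
    have "ln (real N + 1) / 4 \<le> - ln (Q.bn k0)" using l1 l2 by linarith
    hence "(ln (real N + 1) / 4) / real N \<le> - ln (Q.bn k0) / real N" using Nr by (intro divide_right_mono) auto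
    then show "ln (real (card Lam) + 1) / (4 * real (card Lam))
              \<le> rel_entropy Lam (mu_MC Lam m) (mu_C Lam (artanh (- m))) / real (card Lam)"
      unfolding R N_def[symmetric] by simp
  qed
qed

theorem corollary3p9:
  fixes m :: real
  assumes "m \<noteq> 1" and "m \<noteq> -1"
  defines "\<mu> \<equiv> artanh (- m)"
  shows
    "(\<forall>(Lam :: 'a set) I (f :: ('a \<Rightarrow> real) \<Rightarrow> real).
        finite Lam \<and> Lam \<noteq> {} \<and> I \<subseteq> Lam \<and> m \<in> RanM Lam \<longrightarrow>
          \<bar>expect Lam (mu_MC Lam m) (f \<circ> proj I) - expect Lam (mu_C Lam \<mu>) (f \<circ> proj I)\<bar>
            \<le> sqrt (2 * real (card I)) * maxabs I f
               * sqrt (rel_entropy Lam (mu_MC Lam m) (mu_C Lam \<mu>) / real (card Lam))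
          \<and> sqrt (2 * real (card I)) * maxabs I f
               * sqrt (rel_entropy Lam (mu_MC Lam m) (mu_C Lam \<mu>) / real (card Lam))
            \<le> sqrt (2 * real (card I)) * maxabs I f
               * sqrt (ln (real (card Lam) + 1) / real (card Lam)))
     \<and> (\<forall>(I :: 'a set) (f :: ('a \<Rightarrow> real) \<Rightarrow> real). finite I \<longrightarrow>
          (\<exists>C N0. \<forall>Lam :: 'a set.
             finite Lam \<and> I \<subseteq> Lam \<and> card Lam \<ge> N0 \<and> m \<in> RanM Lam \<longrightarrow>
               \<bar>expect Lam (mu_MC Lam m) (f \<circ> proj I) - expect Lam (mu_C Lam \<mu>) (f \<circ> proj I)\<bar>
                 \<le> C * sqrt (ln (real (card Lam))) / sqrt (real (card Lam))))
     \<and> (\<exists>N0 :: nat. \<forall>Lam :: 'a set.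
          finite Lam \<and> card Lam \<ge> N0 \<and> m \<in> RanM Lam \<longrightarrow>
            ln (real (card Lam) + 1) / (4 * real (card Lam))
              \<le> rel_entropy Lam (mu_MC Lam m) (mu_C Lam \<mu>) / real (card Lam))"
proof -
  have A: "\<forall>(Lam :: 'a set) I (f :: ('a \<Rightarrow> real) \<Rightarrow> real).
        finite Lam \<and> Lam \<noteq> {} \<and> I \<subseteq> Lam \<and> m \<in> RanM Lam \<longrightarrow>
          \<bar>expect Lam (mu_MC Lam m) (f \<circ> proj I) - expect Lam (mu_C Lam (artanh (- m))) (f \<circ> proj I)\<bar>
            \<le> sqrt (2 * real (card I)) * maxabs I f
               * sqrt (rel_entropy Lam (mu_MC Lam m) (mu_C Lam (artanh (- m))) / real (card Lam))
          \<and> sqrt (2 * real (card I)) * maxabs I f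
               * sqrt (rel_entropy Lam (mu_MC Lam m) (mu_C Lam (artanh (- m))) / real (card Lam))
            \<le> sqrt (2 * real (card I)) * maxabs I f
               * sqrt (ln (real (card Lam) + 1) / real (card Lam))"
    using part1[OF assms(1) assms(2)] by blast
  have B: "\<forall>(I :: 'a set) (f :: ('a \<Rightarrow> real) \<Rightarrow> real). finite I \<longrightarrow>
          (\<exists>C N0. \<forall>Lam :: 'a set.
             finite Lam \<and> I \<subseteq> Lam \<and> card Lam \<ge> N0 \<and> m \<in> RanM Lam \<longrightarrow>
               \<bar>expect Lam (mu_MC Lam m) (f \<circ> proj I) - expect Lam (mu_C Lam (artanh (- m))) (f \<circ> proj I)\<bar>
                 \<le> C * sqrt (ln (real (card Lam))) / sqrt (real (card Lam)))"
    using part2[OF assms(1) assms(2)] by blast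
  have C: "\<exists>N0 :: nat. \<forall>Lam :: 'a set.
          finite Lam \<and> card Lam \<ge> N0 \<and> m \<in> RanM Lam \<longrightarrow>
            ln (real (card Lam) + 1) / (4 * real (card Lam))
              \<le> rel_entropy Lam (mu_MC Lam m) (mu_C Lam (artanh (- m))) / real (card Lam)"
    by (rule part3[OF assms(1) assms(2)])
  show ?thesis unfolding \<mu>_def using A B C by blast
qed

end
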